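(* Let $G$ be a compact group with Haar measure $\mu$ normalized so that $\mu(G)=1$, let $f$ be a bounded measurable function on $G$, and let $\operatorname P_f$ be the operator on $L^2(G)$ of pointwise multiplication by $f$. Let $\operatorname R$ be an operator on $L^2(G)$ which commutes with left multiplication by elements of $G$, so that (equivalently) there are linear operators $\operatorname R_\rho$ on the representation spaces of the $\rho\in\hat G$ with $\operatorname R\cdot g(x)=\sum_{\rho\in\hat G} d_\rho\operatorname{tr}[\operatorname R_\rho\hat g(\rho)\rho(x)]$ for all $g\in L^2(G)$. Then $$\|\operatorname P_f\operatorname R\|_2^2=\|f\|_2^2\sum_{\rho\in\hat G} d_\rho\|\operatorname R_\rho\|_2^2.$$
   Context: $\hat G$ is the set of (equivalence classes of) irreducible unitary representations of $G$, $d_\rho$ the dimension of $\rho$, $\hat g(\rho)=\int_G g(x)\rho(x)^\dagger\,d\mu(x)$. Left multiplication is $[\operatorname L_x g](y)=g(x^{-1}y)$. For operators $\|\cdot\|_2$ is the Hilbert–Schmidt norm (possibly infinite); for $f$ it is the $L^2$-norm. *)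

theory Defs
  imports "HOL-Analysis.Analysis" "HOL-Probability.Probability"
begin

text \<open>Compact (Hausdorff) topological groups, written additively (group_add need not be
commutative): the group product is x + y, the inverse is - x, the unit is 0.\<close>

definition compact_group :: "'g::{group_add,t2_space} itself \<Rightarrow> bool" where
  "compact_group _ \<longleftrightarrow> compact (UNIV :: 'g set)
     \<and> continuous_on UNIV (\<lambda>p::'g \<times> 'g. fst p + snd p)
     \<and> continuous_on UNIV (\<lambda>x::'g. - x)"

definition haar_prob :: "'g::{group_add,t2_space} measure \<Rightarrow> bool" where
  "haar_prob \<mu> \<longleftrightarrow> prob_space \<mu> \<and> sets \<mu> = sets borel
     \<and> (\<forall>x A. A \<in> sets borel \<longrightarrow> emeasure \<mu> ((\<lambda>y. x + y) ` A) = emeasure \<mu> A)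
     \<and> (\<forall>A \<in> sets borel. emeasure \<mu> A = (INF U \<in> {U. open U \<and> A \<subseteq> U}. emeasure \<mu> U))
     \<and> (\<forall>U. open U \<longrightarrow> emeasure \<mu> U = (SUP K \<in> {K. compact K \<and> K \<subseteq> U}. emeasure \<mu> K))"

definition left_mult :: "'g::group_add \<Rightarrow> ('g \<Rightarrow> complex) \<Rightarrow> 'g \<Rightarrow> complex" where
  "left_mult x g = (\<lambda>y. g (- x + y))"

definition L2 :: "'g measure \<Rightarrow> ('g \<Rightarrow> complex) set" where
  "L2 \<mu> = {g. g \<in> borel_measurable \<mu> \<and> integrable \<mu> (\<lambda>x. (cmod (g x))\<^sup>2)}"

definition L2_inner :: "'g measure \<Rightarrow> ('g \<Rightarrow> complex) \<Rightarrow> ('g \<Rightarrow> complex) \<Rightarrow> complex" where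
  "L2_inner \<mu> g h = (\<integral>x. g x * cnj (h x) \<partial>\<mu>)"

definition L2_norm_sq :: "'g measure \<Rightarrow> ('g \<Rightarrow> complex) \<Rightarrow> ennreal" where
  "L2_norm_sq \<mu> g = (\<integral>\<^sup>+ x. ennreal ((cmod (g x))\<^sup>2) \<partial>\<mu>)"

text \<open>Squared Hilbert--Schmidt norm of an operator T on L^2(mu) (possibly infinite): supremum over
finite orthonormal families E of the sum of ||T e||^2 (equal to the sum over an orthonormal basis).\<close>
definition orthonormal_L2 :: "'g measure \<Rightarrow> ('g \<Rightarrow> complex) set \<Rightarrow> bool" where
  "orthonormal_L2 \<mu> E \<longleftrightarrow> E \<subseteq> L2 \<mu>
     \<and> (\<forall>e\<in>E. \<forall>e'\<in>E. L2_inner \<mu> e e' = (if e = e' then 1 else 0))"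

definition HS_norm_sq :: "'g measure \<Rightarrow> (('g \<Rightarrow> complex) \<Rightarrow> ('g \<Rightarrow> complex)) \<Rightarrow> ennreal" where
  "HS_norm_sq \<mu> T = (SUP E \<in> {E. finite E \<and> orthonormal_L2 \<mu> E}. \<Sum>e\<in>E. L2_norm_sq \<mu> (T e))"

text \<open>d x d complex matrices are represented as functions nat => nat => complex, only the entries
with indices < d being relevant; vectors of C^d as nat => complex vanishing at indices >= d.\<close>

definition cvecs :: "nat \<Rightarrow> (nat \<Rightarrow> complex) set" where
  "cvecs d = {v. \<forall>k\<ge>d. v k = 0}"

definition mat_vec :: "nat \<Rightarrow> (nat \<Rightarrow> nat \<Rightarrow> complex) \<Rightarrow> (nat \<Rightarrow> complex) \<Rightarrow> nat \<Rightarrow> complex" where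
  "mat_vec d A v = (\<lambda>a. if a < d then (\<Sum>b<d. A a b * v b) else 0)"

definition mat_prod :: "nat \<Rightarrow> (nat \<Rightarrow> nat \<Rightarrow> complex) \<Rightarrow> (nat \<Rightarrow> nat \<Rightarrow> complex) \<Rightarrow> nat \<Rightarrow> nat \<Rightarrow> complex" where
  "mat_prod d A B = (\<lambda>a b. \<Sum>k<d. A a k * B k b)"

definition mat_trace :: "nat \<Rightarrow> (nat \<Rightarrow> nat \<Rightarrow> complex) \<Rightarrow> complex" where
  "mat_trace d A = (\<Sum>a<d. A a a)"

definition mat_HS_norm_sq :: "nat \<Rightarrow> (nat \<Rightarrow> nat \<Rightarrow> complex) \<Rightarrow> real" where
  "mat_HS_norm_sq d A = (\<Sum>a<d. \<Sum>b<d. (cmod (A a b))\<^sup>2)"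

definition is_unitary_mat :: "nat \<Rightarrow> (nat \<Rightarrow> nat \<Rightarrow> complex) \<Rightarrow> bool" where
  "is_unitary_mat d U \<longleftrightarrow> (\<forall>a<d. \<forall>b<d. (\<Sum>k<d. U a k * cnj (U b k)) = (if a = b then 1 else 0))"

definition unitary_rep :: "nat \<Rightarrow> ('g::{group_add,topological_space} \<Rightarrow> nat \<Rightarrow> nat \<Rightarrow> complex) \<Rightarrow> bool" where
  "unitary_rep d \<rho> \<longleftrightarrow>
     (\<forall>x y. \<forall>a<d. \<forall>b<d. \<rho> (x + y) a b = mat_prod d (\<rho> x) (\<rho> y) a b)
     \<and> (\<forall>x. is_unitary_mat d (\<rho> x))
     \<and> (\<forall>a<d. \<forall>b<d. continuous_on UNIV (\<lambda>x. \<rho> x a b))"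

definition irreducible_rep :: "nat \<Rightarrow> ('g::{group_add,topological_space} \<Rightarrow> nat \<Rightarrow> nat \<Rightarrow> complex) \<Rightarrow> bool" where
  "irreducible_rep d \<rho> \<longleftrightarrow> unitary_rep d \<rho> \<and> d > 0 \<and>
     (\<forall>V. V \<subseteq> cvecs d \<and> (\<lambda>_. 0) \<in> V
          \<and> (\<forall>v\<in>V. \<forall>w\<in>V. (\<lambda>k. v k + w k) \<in> V)
          \<and> (\<forall>c. \<forall>v\<in>V. (\<lambda>k. c * v k) \<in> V)
          \<and> (\<forall>x. \<forall>v\<in>V. mat_vec d (\<rho> x) v \<in> V)
        \<longrightarrow> V = {\<lambda>_. 0} \<or> V = cvecs d)"

definition equiv_rep :: "nat \<Rightarrow> ('g \<Rightarrow> nat \<Rightarrow> nat \<Rightarrow> complex) \<Rightarrow> nat \<Rightarrow> ('g \<Rightarrow> nat \<Rightarrow> nat \<Rightarrow> complex) \<Rightarrow> bool" where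
  "equiv_rep d \<rho> d' \<sigma> \<longleftrightarrow> d = d' \<and> (\<exists>U. is_unitary_mat d U \<and>
     (\<forall>x. \<forall>a<d. \<forall>b<d. mat_prod d U (\<rho> x) a b = mat_prod d (\<sigma> x) U a b))"

text \<open>A complete system of representatives (rho_i, i in I, of dimension d_i) of G-hat.\<close>
definition dual_reps :: "'g::{group_add,topological_space} itself \<Rightarrow> 'i set \<Rightarrow> ('i \<Rightarrow> nat)
    \<Rightarrow> ('i \<Rightarrow> 'g \<Rightarrow> nat \<Rightarrow> nat \<Rightarrow> complex) \<Rightarrow> bool" where
  "dual_reps _ I d \<rho> \<longleftrightarrow>
     (\<forall>i\<in>I. irreducible_rep (d i) (\<rho> i))
     \<and> (\<forall>i\<in>I. \<forall>j\<in>I. equiv_rep (d i) (\<rho> i) (d j) (\<rho> j) \<longrightarrow> i = j)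
     \<and> (\<forall>n (\<sigma>::'g \<Rightarrow> nat \<Rightarrow> nat \<Rightarrow> complex). irreducible_rep n \<sigma> \<longrightarrow>
          (\<exists>i\<in>I. equiv_rep n \<sigma> (d i) (\<rho> i)))"

definition fourier_coeff :: "'g measure \<Rightarrow> ('g \<Rightarrow> complex) \<Rightarrow> ('g \<Rightarrow> nat \<Rightarrow> nat \<Rightarrow> complex)
    \<Rightarrow> nat \<Rightarrow> nat \<Rightarrow> complex" where
  "fourier_coeff \<mu> g \<rho> = (\<lambda>a b. \<integral>x. g x * cnj (\<rho> x b a) \<partial>\<mu>)"

definition mult_op :: "('g \<Rightarrow> complex) \<Rightarrow> ('g \<Rightarrow> complex) \<Rightarrow> 'g \<Rightarrow> complex" where
  "mult_op f g = (\<lambda>x. f x * g x)"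

end

theory Submission
  imports Defs "Jordan_Normal_Form.Char_Poly"
begin

lemma eigen_exists:
  fixes M :: "nat \<Rightarrow> nat \<Rightarrow> complex" assumes "d > 0"
  shows "\<exists>l v. v \<in> cvecs d \<and> v \<noteq> (\<lambda>_. 0) \<and> mat_vec d M v = (\<lambda>k. l * v k)"
proof -
  define A where "A = Matrix.mat d d (\<lambda>(a,b). M a b)"
  have A: "A \<in> carrier_mat d d" unfolding A_def by simp
  obtain as where as: "char_poly A = (\<Prod> a \<leftarrow> as. [:- a, 1:])" "length as = d"
    using char_poly_factorized[OF A] by blast
  then obtain l where l: "l \<in> set as" using assms by (cases as) auto
  have "poly (char_poly A) l = 0" unfolding as(1) using l
    by (induction as) (auto simp: poly_prod_list)
  then have "eigenvalue A l" using eigenvalue_root_char_poly[OF A] by simp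
  then obtain v where v: "eigenvector A v l" unfolding eigenvalue_def by blast
  have vd: "v \<in> carrier_vec d" "v \<noteq> 0\<^sub>v d" "A *\<^sub>v v = l \<cdot>\<^sub>v v" using v A unfolding eigenvector_def by auto
  define w where "w k = (if k < d then v $ k else 0)" for k
  have "w \<in> cvecs d" unfolding cvecs_def w_def by auto
  moreover have "w \<noteq> (\<lambda>_. 0)"
  proof
    assume "w = (\<lambda>_. 0)"
    then have "\<And>k. k < d \<Longrightarrow> v $ k = 0" unfolding w_def by metis
    then have "v = 0\<^sub>v d" using vd(1) by (intro eq_vecI) auto
    then show False using vd(2) by simp
  qed
  moreover have "mat_vec d M w = (\<lambda>k. l * w k)"
  proof
    fix a show "mat_vec d M w a = l * w a"
    proof (cases "a < d")
      case True
      have "(A *\<^sub>v v) $ a = (\<Sum>b<d. M a b * w b)"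
        using True vd(1) unfolding A_def w_def
        by (auto simp: scalar_prod_def lessThan_atLeast0 intro!: sum.cong)
      then show ?thesis using True vd unfolding mat_vec_def w_def by auto
    qed (simp add: mat_vec_def w_def)
  qed
  ultimately show ?thesis by blast
qed


lemma sum_delta_r:
  fixes f :: "nat \<Rightarrow> complex"
  assumes "b < d" shows "(\<Sum>m<d. f m * (if m = b then 1 else 0)) = f b"
proof -
  have "(\<Sum>m<d. f m * (if m = b then 1 else 0)) = (\<Sum>m<d. if m = b then f m else 0)"
    by (intro sum.cong) auto
  also have "\<dots> = f b" using assms by (simp add: sum.delta)
  finally show ?thesis .
qed

lemma sum_delta_l:
  fixes f :: "nat \<Rightarrow> complex"
  assumes "b < d" shows "(\<Sum>m<d. (if b = m then 1 else 0) * f m) = f b"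
proof -
  have "(\<Sum>m<d. (if b = m then 1 else 0) * f m) = (\<Sum>m<d. if m = b then f m else 0)"
    by (intro sum.cong) auto
  also have "\<dots> = f b" using assms by (simp add: sum.delta)
  finally show ?thesis .
qed

lemma ur_mult: "unitary_rep d \<rho> \<Longrightarrow> a < d \<Longrightarrow> b < d \<Longrightarrow> \<rho> (x + y) a b = (\<Sum>k<d. \<rho> x a k * \<rho> y k b)"
  unfolding unitary_rep_def mat_prod_def by blast

lemma ur_rows: "unitary_rep d \<rho> \<Longrightarrow> a < d \<Longrightarrow> b < d \<Longrightarrow>
   (\<Sum>k<d. \<rho> x a k * cnj (\<rho> x b k)) = (if a = b then 1 else 0)"
  unfolding unitary_rep_def is_unitary_mat_def by blast

lemma ur_cont: "unitary_rep d \<rho> \<Longrightarrow> a < d \<Longrightarrow> b < d \<Longrightarrow> continuous_on UNIV (\<lambda>x. \<rho> x a b)"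
  unfolding unitary_rep_def by blast

lemma unitary_cancel:
  fixes A :: "nat \<Rightarrow> complex"
  assumes "\<And>m b. m < d \<Longrightarrow> b < d \<Longrightarrow> (\<Sum>k<d. V m k * cnj (V b k)) = (if m = b then 1 else 0)" "b < d"
  shows "(\<Sum>k<d. (\<Sum>m<d. A m * V m k) * cnj (V b k)) = A b"
proof -
  have "(\<Sum>k<d. (\<Sum>m<d. A m * V m k) * cnj (V b k)) = (\<Sum>m<d. A m * (\<Sum>k<d. V m k * cnj (V b k)))"
    unfolding sum_distrib_right sum_distrib_left mult.assoc by (rule sum.swap)
  also have "\<dots> = (\<Sum>m<d. A m * (if m = b then 1 else 0))"
    using assms by (intro sum.cong) auto
  also have "\<dots> = A b" using sum_delta_r assms(2) by blast
  finally show ?thesis .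
qed

lemma ur_zero:
  assumes ur: "unitary_rep d \<rho>" and ab: "a < d" "b < d"
  shows "\<rho> 0 a b = (if a = b then 1 else 0)"
proof -
  have "(if a = b then 1 else 0) = (\<Sum>k<d. \<rho> (0+0) a k * cnj (\<rho> 0 b k))"
    using ur_rows[OF ur ab, of 0] by simp
  also have "\<dots> = (\<Sum>k<d. (\<Sum>m<d. \<rho> 0 a m * \<rho> 0 m k) * cnj (\<rho> 0 b k))"
    using ur_mult[OF ur ab(1), of _ 0 0] by (intro sum.cong) simp_all
  also have "\<dots> = \<rho> 0 a b"
    by (rule unitary_cancel) (use ur_rows[OF ur] ab in auto)
  finally show ?thesis by simp
qed

lemma ur_neg:
  assumes ur: "unitary_rep d \<rho>" and ab: "a < d" "b < d"
  shows "\<rho> (-x) a b = cnj (\<rho> x b a)"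
proof -
  have "\<rho> (-x) a b = (\<Sum>k<d. (\<Sum>m<d. \<rho> (-x) a m * \<rho> x m k) * cnj (\<rho> x b k))"
    by (rule unitary_cancel[symmetric]) (use ur_rows[OF ur] ab in auto)
  also have "\<dots> = (\<Sum>k<d. \<rho> (-x + x) a k * cnj (\<rho> x b k))"
    using ur_mult[OF ur ab(1), of _ "-x" x] by (intro sum.cong) simp_all
  also have "\<dots> = (\<Sum>k<d. (if a = k then 1 else 0) * cnj (\<rho> x b k))"
    using ur_zero[OF ur ab(1)] by (intro sum.cong) auto
  also have "\<dots> = cnj (\<rho> x b a)" by (rule sum_delta_l) fact
  finally show ?thesis .
qed

lemma ur_cols:
  assumes ur: "unitary_rep d \<rho>" and ab: "a < d" "b < d"
  shows "(\<Sum>k<d. cnj (\<rho> x k a) * \<rho> x k b) = (if a = b then 1 else 0)"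
proof -
  have "(\<Sum>k<d. cnj (\<rho> x k a) * \<rho> x k b) = (\<Sum>k<d. \<rho> (-x) a k * \<rho> x k b)"
    using ur_neg[OF ur ab(1)] by (intro sum.cong) auto
  also have "\<dots> = \<rho> (-x + x) a b" using ur_mult[OF ur ab, of "-x" x] by simp
  also have "\<dots> = (if a = b then 1 else 0)" using ur_zero[OF ur ab] by simp
  finally show ?thesis .
qed

lemma mp_assoc: "mat_prod n2 (mat_prod n1 A B) C a b = mat_prod n1 A (mat_prod n2 B C) a b"
  unfolding mat_prod_def sum_distrib_right sum_distrib_left mult.assoc by (rule sum.swap)

lemma mp_cong_r: "(\<And>m. m < n \<Longrightarrow> X m b = Y m b) \<Longrightarrow> mat_prod n A X a b = mat_prod n A Y a b"
  unfolding mat_prod_def by (intro sum.cong) auto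

lemma mp_cong_l: "(\<And>m. m < n \<Longrightarrow> X a m = Y a m) \<Longrightarrow> mat_prod n X B a b = mat_prod n Y B a b"
  unfolding mat_prod_def by (intro sum.cong) auto

lemma mv_comp: "mat_vec d A (mat_vec d B u) = mat_vec d (mat_prod d A B) u"
proof
  fix a
  show "mat_vec d A (mat_vec d B u) a = mat_vec d (mat_prod d A B) u a"
  proof (cases "a < d")
    case True
    have "(\<Sum>b<d. A a b * mat_vec d B u b) = (\<Sum>b<d. A a b * (\<Sum>c<d. B b c * u c))"
      unfolding mat_vec_def by (intro sum.cong) auto
    also have "\<dots> = (\<Sum>c<d. (\<Sum>b<d. A a b * B b c) * u c)"
      unfolding sum_distrib_right sum_distrib_left mult.assoc by (rule sum.swap)
    moreover have "mat_vec d A (mat_vec d B u) a = (\<Sum>b<d. A a b * mat_vec d B u b)"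
      unfolding mat_vec_def[of d A "mat_vec d B u"] using True by simp
    moreover have "mat_vec d (mat_prod d A B) u a = (\<Sum>c<d. (\<Sum>b<d. A a b * B b c) * u c)"
      using True by (simp add: mat_vec_def mat_prod_def)
    ultimately show ?thesis by simp
  qed (simp add: mat_vec_def)
qed

lemma mv_cong: "(\<And>a b. a < d \<Longrightarrow> b < d \<Longrightarrow> A a b = B a b) \<Longrightarrow> mat_vec d A u = mat_vec d B u"
  unfolding mat_vec_def by (intro ext) auto

lemma mv_scale: "mat_vec d A (\<lambda>k. c * u k) = (\<lambda>k. c * mat_vec d A u k)"
  unfolding mat_vec_def by (auto simp: sum_distrib_left mult_ac)

lemma mv_add: "mat_vec d A (\<lambda>k. u k + w k) = (\<lambda>k. mat_vec d A u k + mat_vec d A w k)"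
  unfolding mat_vec_def by (auto simp: sum.distrib distrib_left)

lemma mv_zero: "mat_vec d A (\<lambda>_. 0) = (\<lambda>_. 0)"
  unfolding mat_vec_def by auto

lemma mv_in: "mat_vec d A u \<in> cvecs d"
  unfolding mat_vec_def cvecs_def by auto

lemma schur_scalar:
  assumes irr: "irreducible_rep d \<rho>"
    and comm: "\<And>x a b. a < d \<Longrightarrow> b < d \<Longrightarrow> mat_prod d M (\<rho> x) a b = mat_prod d (\<rho> x) M a b"
  shows "\<exists>l. \<forall>a<d. \<forall>b<d. M a b = (if a = b then l else 0)"
proof -
  have d0: "d > 0" using irr unfolding irreducible_rep_def by blast
  obtain l v where v: "v \<in> cvecs d" "v \<noteq> (\<lambda>_. 0)" "mat_vec d M v = (\<lambda>k. l * v k)"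
    using eigen_exists[OF d0] by blast
  define V where "V = {u \<in> cvecs d. mat_vec d M u = (\<lambda>k. l * u k)}"
  have "V \<subseteq> cvecs d" unfolding V_def by auto
  moreover have "(\<lambda>_. 0) \<in> V" unfolding V_def cvecs_def by (simp add: mv_zero)
  moreover have "\<forall>u\<in>V. \<forall>w\<in>V. (\<lambda>k. u k + w k) \<in> V"
    unfolding V_def cvecs_def by (auto simp: mv_add distrib_left)
  moreover have "\<forall>c. \<forall>u\<in>V. (\<lambda>k. c * u k) \<in> V"
    unfolding V_def cvecs_def by (auto simp: mv_scale mult_ac)
  moreover have "\<forall>x. \<forall>u\<in>V. mat_vec d (\<rho> x) u \<in> V"
  proof (intro allI ballI)
    fix x u assume u: "u \<in> V"
    have "mat_vec d M (mat_vec d (\<rho> x) u) = mat_vec d (mat_prod d M (\<rho> x)) u" by (rule mv_comp)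
    also have "\<dots> = mat_vec d (mat_prod d (\<rho> x) M) u" by (rule mv_cong) (rule comm)
    also have "\<dots> = mat_vec d (\<rho> x) (mat_vec d M u)" by (rule mv_comp[symmetric])
    also have "\<dots> = (\<lambda>k. l * mat_vec d (\<rho> x) u k)" using u unfolding V_def by (simp add: mv_scale)
    finally show "mat_vec d (\<rho> x) u \<in> V" unfolding V_def using mv_in by blast
  qed
  ultimately have "V = {\<lambda>_. 0} \<or> V = cvecs d" using irr unfolding irreducible_rep_def by blast
  moreover have "v \<in> V" using v unfolding V_def by auto
  ultimately have VV: "V = cvecs d" using v(2) by auto
  have "\<forall>a<d. \<forall>b<d. M a b = (if a = b then l else 0)"
  proof (intro allI impI)
    fix a b assume ab: "a < d" "b < d"
    define e where "e = (\<lambda>k. if k = b then 1 else (0::complex))"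
    have "e \<in> V" unfolding VV e_def cvecs_def using ab by auto
    then have "mat_vec d M e a = l * e a" unfolding V_def by simp
    moreover have "mat_vec d M e a = M a b" using ab unfolding mat_vec_def e_def
      by (simp add: sum_delta_r)
    ultimately show "M a b = (if a = b then l else 0)" unfolding e_def by auto
  qed
  then show ?thesis by blast
qed


lemma schur_equiv:
  assumes irr1: "irreducible_rep d1 \<rho>1" and irr2: "irreducible_rep d2 \<rho>2"
    and inter: "\<And>y a b. a < d1 \<Longrightarrow> b < d2 \<Longrightarrow> mat_prod d2 M (\<rho>2 y) a b = mat_prod d1 (\<rho>1 y) M a b"
    and nz: "a0 < d1" "b0 < d2" "M a0 b0 \<noteq> 0"
  shows "equiv_rep d2 \<rho>2 d1 \<rho>1"
proof -
  have ur1: "unitary_rep d1 \<rho>1" and ur2: "unitary_rep d2 \<rho>2"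
    using irr1 irr2 unfolding irreducible_rep_def by blast+
  define N where "N = (\<lambda>a b. cnj (M b a))"
  have interN: "mat_prod d1 N (\<rho>1 y) a b = mat_prod d2 (\<rho>2 y) N a b" if ab: "a < d2" "b < d1" for y a b
  proof -
    have "mat_prod d1 N (\<rho>1 y) a b = (\<Sum>k<d1. cnj (M k a) * cnj (\<rho>1 (-y) b k))"
      unfolding mat_prod_def N_def by (intro sum.cong) (auto simp: ur_neg[OF ur1 ab(2)])
    also have "\<dots> = cnj (mat_prod d1 (\<rho>1 (-y)) M b a)"
      unfolding mat_prod_def by (simp add: mult.commute)
    also have "\<dots> = cnj (mat_prod d2 M (\<rho>2 (-y)) b a)" using inter[OF ab(2) ab(1)] by simp
    also have "\<dots> = (\<Sum>k<d2. cnj (M b k) * \<rho>2 y a k)"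
      unfolding mat_prod_def by (simp add: ur_neg[OF ur2 _ ab(1)])
    also have "\<dots> = mat_prod d2 (\<rho>2 y) N a b"
      unfolding mat_prod_def N_def by (simp add: mult.commute)
    finally show ?thesis .
  qed
  define P where "P = mat_prod d1 N M"
  have commP: "mat_prod d2 P (\<rho>2 x) a b = mat_prod d2 (\<rho>2 x) P a b" if "a < d2" "b < d2" for x a b
  proof -
    have "mat_prod d2 P (\<rho>2 x) a b = mat_prod d1 N (mat_prod d2 M (\<rho>2 x)) a b"
      unfolding P_def by (rule mp_assoc)
    also have "\<dots> = mat_prod d1 N (mat_prod d1 (\<rho>1 x) M) a b"
      by (rule mp_cong_r) (use inter that in auto)
    also have "\<dots> = mat_prod d1 (mat_prod d1 N (\<rho>1 x)) M a b"
      by (rule mp_assoc[symmetric])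
    also have "\<dots> = mat_prod d1 (mat_prod d2 (\<rho>2 x) N) M a b"
      by (rule mp_cong_l) (use interN that in auto)
    also have "\<dots> = mat_prod d2 (\<rho>2 x) P a b"
      unfolding P_def by (rule mp_assoc)
    finally show ?thesis .
  qed
  obtain c where c: "\<forall>a<d2. \<forall>b<d2. P a b = (if a = b then c else 0)"
    using schur_scalar[OF irr2 commP] by blast
  define Q where "Q = mat_prod d2 M N"
  have commQ: "mat_prod d1 Q (\<rho>1 x) a b = mat_prod d1 (\<rho>1 x) Q a b" if "a < d1" "b < d1" for x a b
  proof -
    have "mat_prod d1 Q (\<rho>1 x) a b = mat_prod d2 M (mat_prod d1 N (\<rho>1 x)) a b"
      unfolding Q_def by (rule mp_assoc)
    also have "\<dots> = mat_prod d2 M (mat_prod d2 (\<rho>2 x) N) a b"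
      by (rule mp_cong_r) (use interN that in auto)
    also have "\<dots> = mat_prod d2 (mat_prod d2 M (\<rho>2 x)) N a b"
      by (rule mp_assoc[symmetric])
    also have "\<dots> = mat_prod d2 (mat_prod d1 (\<rho>1 x) M) N a b"
      by (rule mp_cong_l) (use inter that in auto)
    also have "\<dots> = mat_prod d1 (\<rho>1 x) Q a b"
      unfolding Q_def by (rule mp_assoc)
    finally show ?thesis .
  qed
  obtain c' where c': "\<forall>a<d1. \<forall>b<d1. Q a b = (if a = b then c' else 0)"
    using schur_scalar[OF irr1 commQ] by blast
  have "mat_prod d2 M P a0 b0 = (\<Sum>k<d2. if k = b0 then M a0 k * c else 0)"
    unfolding mat_prod_def using c nz by (intro sum.cong) auto
  also have "\<dots> = M a0 b0 * c" using nz by (simp add: sum.delta)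
  finally have e1: "mat_prod d2 M P a0 b0 = M a0 b0 * c" .
  have "mat_prod d1 Q M a0 b0 = (\<Sum>k<d1. if k = a0 then c' * M k b0 else 0)"
    unfolding mat_prod_def using c' nz by (intro sum.cong) auto
  also have "\<dots> = c' * M a0 b0" using nz by (simp add: sum.delta)
  finally have e2: "mat_prod d1 Q M a0 b0 = c' * M a0 b0" .
  have "mat_prod d1 Q M a0 b0 = mat_prod d2 M P a0 b0"
    unfolding P_def Q_def by (rule mp_assoc)
  with e1 e2 nz have cc: "c' = c" by simp
  define r where "r = (\<Sum>k<d2. (cmod (M a0 k))\<^sup>2)"
  have "Q a0 a0 = (\<Sum>k<d2. M a0 k * cnj (M a0 k))" unfolding Q_def mat_prod_def N_def by simp
  also have "\<dots> = of_real r" unfolding r_def of_real_sum complex_norm_square by (rule refl)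
  finally have Qr: "Q a0 a0 = of_real r" .
  have "(cmod (M a0 b0))\<^sup>2 \<le> r" unfolding r_def
    by (rule member_le_sum[of b0 "{..<d2}" "\<lambda>k. (cmod (M a0 k))\<^sup>2"]) (use nz in auto)
  moreover have "(cmod (M a0 b0))\<^sup>2 > 0" using nz by simp
  ultimately have rpos: "r > 0" by linarith
  have cr: "c = of_real r" using c' cc Qr nz by auto
  have "(\<Sum>a<d2. P a a) = (\<Sum>a<d2. c)" by (rule sum.cong) (use c in auto)
  then have tr1: "(\<Sum>a<d2. P a a) = of_nat d2 * c" by simp
  have "(\<Sum>a<d1. Q a a) = (\<Sum>a<d1. c)" by (rule sum.cong) (use c' cc in auto)
  then have tr2: "(\<Sum>a<d1. Q a a) = of_nat d1 * c" by simp
  have "(\<Sum>a<d2. P a a) = (\<Sum>a<d2. \<Sum>k<d1. cnj (M k a) * M k a)"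
    unfolding P_def mat_prod_def N_def by simp
  also have "\<dots> = (\<Sum>k<d1. \<Sum>a<d2. M k a * cnj (M k a))"
    by (subst sum.swap) (simp only: mult.commute)
  also have "\<dots> = (\<Sum>a<d1. Q a a)"
    unfolding Q_def mat_prod_def N_def by simp
  finally have "of_nat d2 * c = of_nat d1 * c" using tr1 tr2 by simp
  moreover have "c \<noteq> 0" using cr rpos by simp
  ultimately have dd: "d1 = d2" by simp
  define U where "U = (\<lambda>a b. M a b / of_real (sqrt r))"
  have sq: "of_real (sqrt r) * of_real (sqrt r) = (of_real r :: complex)"
    using rpos by (simp flip: of_real_mult)
  have "is_unitary_mat d2 U" unfolding is_unitary_mat_def
  proof (intro allI impI)
    fix a b assume ab: "a < d2" "b < d2"
    have "(\<Sum>k<d2. U a k * cnj (U b k)) = (\<Sum>k<d2. M a k * cnj (M b k)) / (of_real (sqrt r) * of_real (sqrt r))"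
      unfolding U_def sum_divide_distrib by (intro sum.cong) auto
    also have "\<dots> = Q a b / of_real r" unfolding sq Q_def mat_prod_def N_def by simp
    also have "Q a b = (if a = b then of_real r else 0)" using c' cc cr ab unfolding dd by auto
    also have "(if a = b then complex_of_real r else 0) / complex_of_real r = (if a = b then 1 else 0)" using rpos by simp
    finally show "(\<Sum>k<d2. U a k * cnj (U b k)) = (if a = b then 1 else 0)" .
  qed
  moreover have "\<forall>x. \<forall>a<d2. \<forall>b<d2. mat_prod d2 U (\<rho>2 x) a b = mat_prod d2 (\<rho>1 x) U a b"
  proof (intro allI impI)
    fix x a b assume ab: "a < d2" "b < d2"
    have "mat_prod d2 U (\<rho>2 x) a b = mat_prod d2 M (\<rho>2 x) a b / of_real (sqrt r)"
      unfolding U_def mat_prod_def sum_divide_distrib by (intro sum.cong) auto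
    also have "\<dots> = mat_prod d1 (\<rho>1 x) M a b / of_real (sqrt r)" using inter[of a b x] ab unfolding dd by simp
    also have "\<dots> = mat_prod d2 (\<rho>1 x) U a b"
      unfolding U_def mat_prod_def dd sum_divide_distrib by (intro sum.cong) auto
    finally show "mat_prod d2 U (\<rho>2 x) a b = mat_prod d2 (\<rho>1 x) U a b" .
  qed
  ultimately show ?thesis unfolding equiv_rep_def using dd by blast
qed



lemma meas_cnj[measurable]: "g \<in> borel_measurable M \<Longrightarrow> (\<lambda>x. cnj (g x)) \<in> borel_measurable M"
proof -
  assume g: "g \<in> borel_measurable M"
  have "cnj \<in> borel_measurable borel"
    by (rule borel_measurable_continuous_onI) (intro continuous_intros)
  from measurable_compose[OF g this] show ?thesis by (simp add: o_def)
qed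

lemma ab_le_sq: "0 \<le> a \<Longrightarrow> 0 \<le> b \<Longrightarrow> a * b \<le> a\<^sup>2 + (b::real)\<^sup>2"
proof -
  assume "0 \<le> a" "0 \<le> b"
  then have "0 \<le> a * b" by simp
  moreover have "0 \<le> (a - b)\<^sup>2" by simp
  ultimately show ?thesis unfolding power2_diff by linarith
qed

lemma sum_sq_le: "(a + b)\<^sup>2 \<le> 2 * a\<^sup>2 + 2 * (b::real)\<^sup>2"
proof -
  have "0 \<le> (a - b)\<^sup>2" by simp
  then show ?thesis unfolding power2_diff power2_sum by linarith
qed

locale haar_ctx =
  fixes \<mu> :: "'g::{group_add,t2_space} measure"
  assumes cg: "compact_group TYPE('g)" and hp: "haar_prob \<mu>"
begin

lemma ps: "prob_space \<mu>" using hp unfolding haar_prob_def by (rule conjunct1)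

lemma sets_mu: "sets \<mu> = sets borel" using hp unfolding haar_prob_def by (rule conjunct1[OF conjunct2])

lemma space_mu: "space \<mu> = UNIV" using sets_eq_imp_space_eq[OF sets_mu] by simp

lemma meas_iff: "measurable \<mu> N = measurable borel N"
  by (rule measurable_cong_sets[OF sets_mu refl])

lemma cont_meas: "continuous_on UNIV (h :: 'g \<Rightarrow> 'b::topological_space) \<Longrightarrow> h \<in> borel_measurable \<mu>"
  unfolding meas_iff by (rule borel_measurable_continuous_onI)

lemma cont_bounded:
  assumes "continuous_on UNIV (h :: 'g \<Rightarrow> 'b::real_normed_vector)"
  shows "\<exists>B. \<forall>x. norm (h x) \<le> B"
proof -
  have "compact (UNIV :: 'g set)" using cg unfolding compact_group_def by blast
  then have "compact (h ` UNIV)" by (rule compact_continuous_image[OF assms])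
  then have "bounded (h ` UNIV)" by (rule compact_imp_bounded)
  then show ?thesis unfolding bounded_iff by blast
qed

lemma cont_int:
  assumes "continuous_on UNIV (h :: 'g \<Rightarrow> 'b::{banach,second_countable_topology})"
  shows "integrable \<mu> h"
proof -
  obtain B where B: "\<forall>x. norm (h x) \<le> B" using cont_bounded[OF assms] by blast
  interpret prob_space \<mu> by (rule ps)
  show ?thesis by (rule integrable_const_bound[where B=B]) (use B cont_meas[OF assms] in auto)
qed

lemma cont_add: "continuous_on UNIV (\<lambda>p::'g \<times> 'g. fst p + snd p)"
  using cg unfolding compact_group_def by blast

lemma cont_uminus: "continuous_on UNIV (\<lambda>x::'g. - x)"
  using cg unfolding compact_group_def by blast

lemma cont_transl:
  assumes "continuous_on UNIV (h :: 'g \<Rightarrow> 'b::topological_space)"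
  shows "continuous_on UNIV (\<lambda>x. h (y + x))"
proof -
  have "continuous_on UNIV ((\<lambda>p::'g \<times> 'g. fst p + snd p) \<circ> (\<lambda>x. (y, x)))"
    by (rule continuous_on_compose) (auto intro!: continuous_intros intro: continuous_on_subset[OF cont_add])
  then have "continuous_on UNIV (\<lambda>x. y + x)" by (simp add: o_def)
  then have "continuous_on UNIV (h \<circ> (\<lambda>x. y + x))"
    by (rule continuous_on_compose) (auto intro: continuous_on_subset[OF assms])
  then show ?thesis by (simp add: o_def)
qed

lemma transl_cont: "continuous_on UNIV (\<lambda>x::'g. y + x)"
  using cont_transl[of "\<lambda>x. x" y] by simp

lemma left_inv:
  fixes h :: "'g \<Rightarrow> complex"
  assumes h: "h \<in> borel_measurable \<mu>"
  shows "(\<integral>x. h (y + x) \<partial>\<mu>) = (\<integral>x. h x \<partial>\<mu>)"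
proof -
  have T: "(\<lambda>x. y + x) \<in> measurable \<mu> \<mu>"
    unfolding meas_iff measurable_cong_sets[OF refl sets_mu]
    by (rule borel_measurable_continuous_onI[OF transl_cont])
  have D: "distr \<mu> \<mu> (\<lambda>x. y + x) = \<mu>"
  proof (rule measure_eqI)
    show "sets (distr \<mu> \<mu> (\<lambda>x. y + x)) = sets \<mu>" by simp
    fix A assume "A \<in> sets (distr \<mu> \<mu> (\<lambda>x. y + x))"
    then have A: "A \<in> sets \<mu>" by simp
    have pre: "(\<lambda>x. y + x) -` A \<inter> space \<mu> = (\<lambda>x. - y + x) ` A"
    proof -
      have "x \<in> (\<lambda>x. - y + x) ` A" if "y + x \<in> A" for x
        using that by (intro image_eqI[of _ _ "y + x"]) (simp_all add: add.assoc[symmetric])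
      then show ?thesis unfolding space_mu by (auto simp: add.assoc[symmetric])
    qed
    have "emeasure (distr \<mu> \<mu> (\<lambda>x. y + x)) A = emeasure \<mu> ((\<lambda>x. - y + x) ` A)"
      using emeasure_distr[OF T A] pre by simp
    also have "\<dots> = emeasure \<mu> A"
    proof -
      have "\<forall>x A. A \<in> sets borel \<longrightarrow> emeasure \<mu> ((\<lambda>y. x + y) ` A) = emeasure \<mu> A"
        using hp unfolding haar_prob_def by (rule conjunct1[OF conjunct2[OF conjunct2]])
      then show ?thesis using A sets_mu by simp
    qed
    finally show "emeasure (distr \<mu> \<mu> (\<lambda>x. y + x)) A = emeasure \<mu> A" .
  qed
  have "(\<integral>x. h (y + x) \<partial>\<mu>) = integral\<^sup>L (distr \<mu> \<mu> (\<lambda>x. y + x)) h"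
    by (rule integral_distr[OF T h, symmetric])
  then show ?thesis using D by simp
qed

lemma integral_const_mu: "(\<integral>x. c \<partial>\<mu>) = (c :: complex)"
  using prob_space.prob_space[OF ps] by simp

lemma schur_orth:
  fixes I :: "'i set" and d :: "'i \<Rightarrow> nat" and \<rho> :: "'i \<Rightarrow> 'g \<Rightarrow> nat \<Rightarrow> nat \<Rightarrow> complex"
  assumes dr: "dual_reps TYPE('g) I d \<rho>" and ij: "i \<in> I" "j \<in> I"
    and idx: "a < d i" "b < d i" "c < d j" "e < d j"
  shows "(\<integral>x. \<rho> i x a b * cnj (\<rho> j x c e) \<partial>\<mu>) = (if i = j \<and> a = c \<and> b = e then 1 / of_nat (d i) else 0)"
proof -
  have irr: "irreducible_rep (d i) (\<rho> i)" "irreducible_rep (d j) (\<rho> j)"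
    using dr ij unfolding dual_reps_def by blast+
  have ur: "unitary_rep (d i) (\<rho> i)" "unitary_rep (d j) (\<rho> j)"
    using irr unfolding irreducible_rep_def by blast+
  have conti: "continuous_on UNIV (\<lambda>x. \<rho> i x a' b')" if "a' < d i" "b' < d i" for a' b'
    using ur_cont[OF ur(1) that] .
  have contj: "continuous_on UNIV (\<lambda>x. \<rho> j x a' b')" if "a' < d j" "b' < d j" for a' b'
    using ur_cont[OF ur(2) that] .
  define M where "M = (\<lambda>a c. \<integral>x. \<rho> i x a b * cnj (\<rho> j x c e) \<partial>\<mu>)"
  have inter: "mat_prod (d j) M (\<rho> j y) a' c' = mat_prod (d i) (\<rho> i y) M a' c'"
    if ac: "a' < d i" "c' < d j" for y a' c'
  proof -
    define h where "h = (\<lambda>x. \<rho> i x a' b * cnj (\<rho> j (- y + x) c' e))"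
    have hc: "continuous_on UNIV h" unfolding h_def
      by (intro continuous_intros conti cont_transl contj) (use ac idx in auto)
    have "mat_prod (d j) M (\<rho> j y) a' c' = (\<Sum>k<d j. \<integral>x. \<rho> i x a' b * cnj (\<rho> j x k e) * \<rho> j y k c' \<partial>\<mu>)"
      unfolding mat_prod_def M_def by simp
    also have "\<dots> = (\<integral>x. (\<Sum>k<d j. \<rho> i x a' b * cnj (\<rho> j x k e) * \<rho> j y k c') \<partial>\<mu>)"
      by (rule Bochner_Integration.integral_sum[symmetric]) (intro cont_int continuous_intros conti contj, use ac idx in auto)
    also have "\<dots> = (\<integral>x. \<rho> i x a' b * (\<Sum>k<d j. \<rho> j (-x) e k * \<rho> j y k c') \<partial>\<mu>)"
      by (intro Bochner_Integration.integral_cong refl)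
        (auto simp: sum_distrib_left mult.assoc ur_neg[OF ur(2) idx(4)] intro!: sum.cong)
    also have "\<dots> = (\<integral>x. h x \<partial>\<mu>)"
    proof (intro Bochner_Integration.integral_cong refl)
      fix x
      have "(\<Sum>k<d j. \<rho> j (-x) e k * \<rho> j y k c') = \<rho> j (-x + y) e c'"
        using ur_mult[OF ur(2) idx(4) ac(2)] by simp
      also have "\<dots> = \<rho> j (- (-y + x)) e c'" by (simp add: minus_add)
      also have "\<dots> = cnj (\<rho> j (-y + x) c' e)" by (rule ur_neg[OF ur(2) idx(4) ac(2)])
      finally show "\<rho> i x a' b * (\<Sum>k<d j. \<rho> j (-x) e k * \<rho> j y k c') = h x"
        unfolding h_def by simp
    qed
    also have "\<dots> = (\<integral>x. (\<Sum>k<d i. \<rho> i y a' k * \<rho> i x k b) * cnj (\<rho> j x c' e) \<partial>\<mu>)"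
    proof -
      have "h (y + x) = (\<Sum>k<d i. \<rho> i y a' k * \<rho> i x k b) * cnj (\<rho> j x c' e)" for x
        unfolding h_def using ur_mult[OF ur(1) ac(1) idx(2), of y x] by (simp add: add.assoc[symmetric])
      then have "(\<integral>x. h (y + x) \<partial>\<mu>) = (\<integral>x. (\<Sum>k<d i. \<rho> i y a' k * \<rho> i x k b) * cnj (\<rho> j x c' e) \<partial>\<mu>)"
        by simp
      then show ?thesis using left_inv[OF cont_meas[OF hc]] by simp
    qed
    also have "\<dots> = (\<integral>x. (\<Sum>k<d i. \<rho> i y a' k * (\<rho> i x k b * cnj (\<rho> j x c' e))) \<partial>\<mu>)"
      by (simp add: sum_distrib_right mult.assoc)
    also have "\<dots> = (\<Sum>k<d i. \<integral>x. \<rho> i y a' k * (\<rho> i x k b * cnj (\<rho> j x c' e)) \<partial>\<mu>)"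
      by (rule Bochner_Integration.integral_sum) (intro cont_int continuous_intros conti contj, use ac idx in auto)
    also have "\<dots> = mat_prod (d i) (\<rho> i y) M a' c'"
      unfolding mat_prod_def M_def by simp
    finally show ?thesis .
  qed
  show ?thesis
  proof (cases "i = j")
    case False
    have "M a c = 0"
    proof (rule ccontr)
      assume "M a c \<noteq> 0"
      then have "equiv_rep (d j) (\<rho> j) (d i) (\<rho> i)"
        by (intro schur_equiv[OF irr(1) irr(2) inter, of a c]) (use idx in auto)
      then have "j = i" using dr ij unfolding dual_reps_def by blast
      then show False using False by simp
    qed
    then show ?thesis using False unfolding M_def by simp
  next
    case True
    have comm: "mat_prod (d i) M (\<rho> i x) a' b' = mat_prod (d i) (\<rho> i x) M a' b'"
      if "a' < d i" "b' < d i" for x a' b'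
      using inter[of a' b' x] that True by simp
    obtain l where l: "\<forall>a<d i. \<forall>b<d i. M a b = (if a = b then l else 0)"
      using schur_scalar[OF irr(1) comm] by blast
    have "(\<Sum>a<d i. M a a) = (\<Sum>a<d i. l)" by (rule sum.cong) (use l in auto)
    then have tr1: "(\<Sum>a<d i. M a a) = of_nat (d i) * l" by simp
    have "(\<Sum>a<d i. M a a) = (\<integral>x. (\<Sum>a<d i. \<rho> i x a b * cnj (\<rho> i x a e)) \<partial>\<mu>)"
      unfolding M_def True
      by (rule Bochner_Integration.integral_sum[symmetric]) (intro cont_int continuous_intros contj, use idx True in auto)
    also have "\<dots> = (\<integral>x. (if e = b then 1 else 0) \<partial>\<mu>)"
    proof (intro Bochner_Integration.integral_cong refl)
      fix x
      have "(\<Sum>a<d i. \<rho> i x a b * cnj (\<rho> i x a e)) = (\<Sum>a<d i. cnj (\<rho> i x a e) * \<rho> i x a b)"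
        by (simp add: mult.commute)
      also have "\<dots> = (if e = b then 1 else 0)" using ur_cols[OF ur(1)] idx True by auto
      finally show "(\<Sum>a<d i. \<rho> i x a b * cnj (\<rho> i x a e)) = (if e = b then 1 else 0)" .
    qed
    also have "\<dots> = (if e = b then 1 else 0)" by (rule integral_const_mu)
    finally have "of_nat (d i) * l = (if e = b then 1 else 0)" using tr1 by simp
    moreover have "d i > 0" using irr unfolding irreducible_rep_def by blast
    ultimately have "l = (if e = b then 1 else 0) / of_nat (d i)" by (simp add: field_simps)
    then show ?thesis using l idx True unfolding M_def by auto
  qed
qed


lemma L2D: "g \<in> L2 \<mu> \<Longrightarrow> g \<in> borel_measurable \<mu>" "g \<in> L2 \<mu> \<Longrightarrow> integrable \<mu> (\<lambda>x. (cmod (g x))\<^sup>2)"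
  unfolding L2_def by auto

lemma L2I: "g \<in> borel_measurable \<mu> \<Longrightarrow> integrable \<mu> (\<lambda>x. (cmod (g x))\<^sup>2) \<Longrightarrow> g \<in> L2 \<mu>"
  unfolding L2_def by auto

lemma L2_cont: "continuous_on UNIV g \<Longrightarrow> g \<in> L2 \<mu>"
  by (intro L2I cont_meas cont_int continuous_intros)

lemma L2_prod:
  assumes g: "g \<in> L2 \<mu>" and h: "h \<in> L2 \<mu>"
  shows "integrable \<mu> (\<lambda>x. g x * cnj (h x))"
proof (rule Bochner_Integration.integrable_bound)
  show "integrable \<mu> (\<lambda>x. (cmod (g x))\<^sup>2 + (cmod (h x))\<^sup>2)"
    using L2D(2)[OF g] L2D(2)[OF h] by (rule Bochner_Integration.integrable_add)
  show "(\<lambda>x. g x * cnj (h x)) \<in> borel_measurable \<mu>"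
    using L2D(1)[OF g] L2D(1)[OF h] by measurable
  show "AE x in \<mu>. norm (g x * cnj (h x)) \<le> norm ((cmod (g x))\<^sup>2 + (cmod (h x))\<^sup>2)"
    by (intro AE_I2) (simp add: norm_mult ab_le_sq)
qed

lemma L2_lin:
  assumes g: "g \<in> L2 \<mu>" and h: "h \<in> L2 \<mu>"
  shows "(\<lambda>x. a * g x + b * h x) \<in> L2 \<mu>"
proof (rule L2I)
  show m: "(\<lambda>x. a * g x + b * h x) \<in> borel_measurable \<mu>"
    using L2D(1)[OF g] L2D(1)[OF h] by measurable
  show "integrable \<mu> (\<lambda>x. (cmod (a * g x + b * h x))\<^sup>2)"
  proof (rule Bochner_Integration.integrable_bound)
    show "integrable \<mu> (\<lambda>x. 2 * (cmod a)\<^sup>2 * (cmod (g x))\<^sup>2 + 2 * (cmod b)\<^sup>2 * (cmod (h x))\<^sup>2)"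
      using L2D(2)[OF g] L2D(2)[OF h] by (intro Bochner_Integration.integrable_add integrable_mult_right)
    show "(\<lambda>x. (cmod (a * g x + b * h x))\<^sup>2) \<in> borel_measurable \<mu>" using m by measurable
    show "AE x in \<mu>. norm ((cmod (a * g x + b * h x))\<^sup>2) \<le> norm (2 * (cmod a)\<^sup>2 * (cmod (g x))\<^sup>2 + 2 * (cmod b)\<^sup>2 * (cmod (h x))\<^sup>2)"
    proof (intro AE_I2)
      fix x
      have "cmod (a * g x + b * h x) \<le> cmod a * cmod (g x) + cmod b * cmod (h x)"
        by (metis norm_mult norm_triangle_ineq)
      then have "(cmod (a * g x + b * h x))\<^sup>2 \<le> (cmod a * cmod (g x) + cmod b * cmod (h x))\<^sup>2"
        by (simp add: power_mono)
      also have "\<dots> \<le> 2 * (cmod a * cmod (g x))\<^sup>2 + 2 * (cmod b * cmod (h x))\<^sup>2" by (rule sum_sq_le)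
      finally show "norm ((cmod (a * g x + b * h x))\<^sup>2) \<le> norm (2 * (cmod a)\<^sup>2 * (cmod (g x))\<^sup>2 + 2 * (cmod b)\<^sup>2 * (cmod (h x))\<^sup>2)"
        by (simp add: power_mult_distrib)
    qed
  qed
qed

lemma L2_zero: "(\<lambda>x. 0) \<in> L2 \<mu>"
  by (rule L2_cont) simp

lemma L2_scale: "g \<in> L2 \<mu> \<Longrightarrow> (\<lambda>x. a * g x) \<in> L2 \<mu>"
  using L2_lin[of g "\<lambda>x. 0" a 0] L2_zero by simp

lemma L2_diff: "g \<in> L2 \<mu> \<Longrightarrow> h \<in> L2 \<mu> \<Longrightarrow> (\<lambda>x. g x - h x) \<in> L2 \<mu>"
  using L2_lin[of g h 1 "-1"] by simp

lemma L2_sum: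
  assumes "finite J" "\<And>m. m \<in> J \<Longrightarrow> \<phi> m \<in> L2 \<mu>"
  shows "(\<lambda>x. \<Sum>m\<in>J. \<kappa> m * \<phi> m x) \<in> L2 \<mu>"
  using assms
proof (induction J rule: finite_induct)
  case empty then show ?case using L2_zero by simp
next
  case (insert m J)
  have "(\<lambda>x. \<kappa> m * \<phi> m x + 1 * (\<Sum>m\<in>J. \<kappa> m * \<phi> m x)) \<in> L2 \<mu>"
    using insert by (intro L2_lin) auto
  then show ?case using insert by simp
qed

lemma inner_cnj: "L2_inner \<mu> g h = cnj (L2_inner \<mu> h g)"
  unfolding L2_inner_def by (subst Bochner_Integration.integral_cnj[symmetric]) (simp add: mult.commute del: Bochner_Integration.integral_cnj)

lemma inner_lin_left:
  assumes "g \<in> L2 \<mu>" "h \<in> L2 \<mu>" "k \<in> L2 \<mu>"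
  shows "L2_inner \<mu> (\<lambda>x. a * g x + b * h x) k = a * L2_inner \<mu> g k + b * L2_inner \<mu> h k"
proof -
  have "L2_inner \<mu> (\<lambda>x. a * g x + b * h x) k = (\<integral>x. a * (g x * cnj (k x)) + b * (h x * cnj (k x)) \<partial>\<mu>)"
    unfolding L2_inner_def by (simp add: algebra_simps)
  also have "\<dots> = (\<integral>x. a * (g x * cnj (k x)) \<partial>\<mu>) + (\<integral>x. b * (h x * cnj (k x)) \<partial>\<mu>)"
    using L2_prod[OF assms(1,3)] L2_prod[OF assms(2,3)]
    by (intro Bochner_Integration.integral_add integrable_mult_right)
  finally show ?thesis unfolding L2_inner_def by simp
qed

lemma inner_diff_left:
  assumes "g \<in> L2 \<mu>" "h \<in> L2 \<mu>" "k \<in> L2 \<mu>"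
  shows "L2_inner \<mu> (\<lambda>x. g x - h x) k = L2_inner \<mu> g k - L2_inner \<mu> h k"
  using inner_lin_left[OF assms, of 1 "-1"] by simp

lemma inner_diff_right:
  assumes "g \<in> L2 \<mu>" "h \<in> L2 \<mu>" "k \<in> L2 \<mu>"
  shows "L2_inner \<mu> k (\<lambda>x. g x - h x) = L2_inner \<mu> k g - L2_inner \<mu> k h"
  using inner_diff_left[OF assms] inner_cnj[of k] inner_cnj[of k g] inner_cnj[of k h] by simp

lemma inner_sum_left:
  assumes "finite J" "\<And>m. m \<in> J \<Longrightarrow> \<phi> m \<in> L2 \<mu>" "k \<in> L2 \<mu>"
  shows "L2_inner \<mu> (\<lambda>x. \<Sum>m\<in>J. \<kappa> m * \<phi> m x) k = (\<Sum>m\<in>J. \<kappa> m * L2_inner \<mu> (\<phi> m) k)"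
proof -
  have "L2_inner \<mu> (\<lambda>x. \<Sum>m\<in>J. \<kappa> m * \<phi> m x) k = (\<integral>x. (\<Sum>m\<in>J. \<kappa> m * (\<phi> m x * cnj (k x))) \<partial>\<mu>)"
    unfolding L2_inner_def by (simp add: sum_distrib_right mult.assoc)
  also have "\<dots> = (\<Sum>m\<in>J. (\<integral>x. \<kappa> m * (\<phi> m x * cnj (k x)) \<partial>\<mu>))"
    using L2_prod assms by (intro Bochner_Integration.integral_sum integrable_mult_right) auto
  finally show ?thesis unfolding L2_inner_def by simp
qed

lemma inner_sum_right:
  assumes "finite J" "\<And>m. m \<in> J \<Longrightarrow> \<phi> m \<in> L2 \<mu>" "k \<in> L2 \<mu>"
  shows "L2_inner \<mu> k (\<lambda>x. \<Sum>m\<in>J. \<kappa> m * \<phi> m x) = (\<Sum>m\<in>J. cnj (\<kappa> m) * L2_inner \<mu> k (\<phi> m))"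
proof -
  have "L2_inner \<mu> k (\<lambda>x. \<Sum>m\<in>J. \<kappa> m * \<phi> m x) = cnj (\<Sum>m\<in>J. \<kappa> m * L2_inner \<mu> (\<phi> m) k)"
    using inner_cnj[of k] inner_sum_left[OF assms] by simp
  also have "\<dots> = (\<Sum>m\<in>J. cnj (\<kappa> m) * L2_inner \<mu> k (\<phi> m))"
    by (simp add: inner_cnj[of k])
  finally show ?thesis .
qed

lemma inner_self: "g \<in> L2 \<mu> \<Longrightarrow> L2_inner \<mu> g g = of_real (\<integral>x. (cmod (g x))\<^sup>2 \<partial>\<mu>)"
proof -
  have "(\<lambda>x. g x * cnj (g x)) = (\<lambda>x. complex_of_real ((cmod (g x))\<^sup>2))"
    by (simp only: complex_norm_square)
  then show ?thesis unfolding L2_inner_def by (simp only: integral_complex_of_real)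
qed

lemma inner_self_Re: "g \<in> L2 \<mu> \<Longrightarrow> Re (L2_inner \<mu> g g) \<ge> 0"
  using inner_self by simp

lemma bessel:
  assumes E: "finite E" "orthonormal_L2 \<mu> E" and K: "K \<in> L2 \<mu>"
  shows "(\<Sum>e\<in>E. (cmod (L2_inner \<mu> e K))\<^sup>2) \<le> Re (L2_inner \<mu> K K)"
proof -
  have EL: "\<And>e. e \<in> E \<Longrightarrow> e \<in> L2 \<mu>" using E(2) unfolding orthonormal_L2_def by blast
  have on: "\<And>e e'. e \<in> E \<Longrightarrow> e' \<in> E \<Longrightarrow> L2_inner \<mu> e e' = (if e = e' then 1 else 0)"
    using E(2) unfolding orthonormal_L2_def by blast
  define \<alpha> where "\<alpha> e = L2_inner \<mu> K e" for e
  define L where "L = (\<lambda>x. \<Sum>e\<in>E. \<alpha> e * e x)"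
  have LL2: "L \<in> L2 \<mu>" unfolding L_def using E(1) EL by (rule L2_sum)
  define s where "s = (\<Sum>e\<in>E. \<alpha> e * cnj (\<alpha> e))"
  have KL: "L2_inner \<mu> K L = s"
  proof -
    have "L2_inner \<mu> K L = (\<Sum>e\<in>E. cnj (\<alpha> e) * L2_inner \<mu> K e)"
      unfolding L_def by (rule inner_sum_right[of E "\<lambda>e. e"]) (use E(1) EL K in auto)
    then show ?thesis unfolding s_def \<alpha>_def by (simp add: mult.commute)
  qed
  have LK: "L2_inner \<mu> L K = s"
  proof -
    have "L2_inner \<mu> L K = (\<Sum>e\<in>E. \<alpha> e * L2_inner \<mu> e K)"
      unfolding L_def by (rule inner_sum_left[of E "\<lambda>e. e"]) (use E(1) EL K in auto)
    then show ?thesis unfolding s_def \<alpha>_def using inner_cnj[of _ K] by simp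
  qed
  have LL: "L2_inner \<mu> L L = s"
  proof -
    have "L2_inner \<mu> L L = (\<Sum>e\<in>E. \<alpha> e * L2_inner \<mu> e L)"
      unfolding L_def[of] by (rule inner_sum_left[of E "\<lambda>e. e"]) (use E(1) EL LL2 L_def in auto)
    also have "\<dots> = (\<Sum>e\<in>E. \<alpha> e * (\<Sum>e'\<in>E. cnj (\<alpha> e') * L2_inner \<mu> e e'))"
    proof (intro sum.cong refl arg_cong2[where f="(*)"])
      fix e assume "e \<in> E"
      then show "L2_inner \<mu> e L = (\<Sum>e'\<in>E. cnj (\<alpha> e') * L2_inner \<mu> e e')"
        unfolding L_def by (intro inner_sum_right[of E "\<lambda>e. e"]) (use E(1) EL in auto)
    qed
    also have "\<dots> = (\<Sum>e\<in>E. \<alpha> e * (\<Sum>e'\<in>E. if e' = e then cnj (\<alpha> e') else 0))"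
      using on by (intro sum.cong refl arg_cong2[where f="(*)"]) auto
    also have "\<dots> = s" unfolding s_def using E(1) by (simp add: sum.delta)
    finally show ?thesis .
  qed
  have h: "(\<lambda>x. K x - L x) \<in> L2 \<mu>" using K LL2 by (rule L2_diff)
  have "L2_inner \<mu> (\<lambda>x. K x - L x) (\<lambda>x. K x - L x)
      = L2_inner \<mu> K (\<lambda>x. K x - L x) - L2_inner \<mu> L (\<lambda>x. K x - L x)"
    by (rule inner_diff_left[OF K LL2 h])
  also have "\<dots> = L2_inner \<mu> K K - s"
    using inner_diff_right[OF K LL2 K] inner_diff_right[OF K LL2 LL2] KL LK LL by simp
  finally have eq: "L2_inner \<mu> (\<lambda>x. K x - L x) (\<lambda>x. K x - L x) = L2_inner \<mu> K K - s" .
  have "s = of_real (\<Sum>e\<in>E. (cmod (L2_inner \<mu> e K))\<^sup>2)"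
    unfolding s_def of_real_sum complex_norm_square \<alpha>_def
    by (intro sum.cong refl) (metis complex_cnj_cnj complex_cnj_mult inner_cnj mult.commute)
  then have "Re s = (\<Sum>e\<in>E. (cmod (L2_inner \<mu> e K))\<^sup>2)" by simp
  moreover have "Re (L2_inner \<mu> (\<lambda>x. K x - L x) (\<lambda>x. K x - L x)) \<ge> 0" by (rule inner_self_Re[OF h])
  ultimately show ?thesis using eq by simp
qed

end


lemma triple_swap: "(\<Sum>p\<in>A. \<Sum>a\<in>B. \<Sum>a'\<in>C. F p a a') = (\<Sum>a\<in>B. \<Sum>a'\<in>C. \<Sum>p\<in>A. (F p a a' :: complex))"
  by (subst sum.swap) (rule sum.cong[OF refl], rule sum.swap)

lemma trace_formula:
  "mat_trace d (mat_prod d (mat_prod d A B) C) = (\<Sum>c<d. \<Sum>b<d. (\<Sum>a<d. C c a * A a b) * B b c)"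
proof -
  have "mat_trace d (mat_prod d (mat_prod d A B) C) = (\<Sum>a<d. \<Sum>c<d. \<Sum>b<d. A a b * B b c * C c a)"
    unfolding mat_trace_def mat_prod_def sum_distrib_right by simp
  also have "\<dots> = (\<Sum>c<d. \<Sum>a<d. \<Sum>b<d. A a b * B b c * C c a)" by (rule sum.swap)
  also have "\<dots> = (\<Sum>c<d. \<Sum>b<d. \<Sum>a<d. A a b * B b c * C c a)"
    by (rule sum.cong[OF refl], rule sum.swap)
  also have "\<dots> = (\<Sum>c<d. \<Sum>b<d. (\<Sum>a<d. C c a * A a b) * B b c)"
    unfolding sum_distrib_right by (simp add: mult_ac)
  finally show ?thesis .
qed

lemma norm_pres:
  fixes U :: "nat \<Rightarrow> nat \<Rightarrow> complex"
  assumes cols: "\<And>a a'. a < d \<Longrightarrow> a' < d \<Longrightarrow> (\<Sum>p<d. cnj (U p a') * U p a) = (if a' = a then 1 else 0)"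
  shows "(\<Sum>p<d. (\<Sum>a<d. U p a * v a) * cnj (\<Sum>a<d. U p a * v a)) = (\<Sum>a<d. v a * cnj (v a))"
proof -
  have "(\<Sum>p<d. (\<Sum>a<d. U p a * v a) * cnj (\<Sum>a<d. U p a * v a))
      = (\<Sum>p<d. \<Sum>a<d. \<Sum>a'<d. (v a * cnj (v a')) * (cnj (U p a') * U p a))"
    unfolding cnj_sum sum_product by (simp add: mult_ac)
  also have "\<dots> = (\<Sum>a<d. \<Sum>a'<d. \<Sum>p<d. (v a * cnj (v a')) * (cnj (U p a') * U p a))"
    by (rule triple_swap)
  also have "\<dots> = (\<Sum>a<d. \<Sum>a'<d. (v a * cnj (v a')) * (if a' = a then 1 else 0))"
    unfolding sum_distrib_left[symmetric] using cols by (intro sum.cong refl) auto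
  also have "\<dots> = (\<Sum>a<d. v a * cnj (v a))"
    by (intro sum.cong refl) (simp add: if_distrib cong: if_cong)
  finally show ?thesis .
qed

definition SF :: "'g measure \<Rightarrow> ('i \<Rightarrow> nat) \<Rightarrow> ('i \<Rightarrow> 'g \<Rightarrow> nat \<Rightarrow> nat \<Rightarrow> complex)
    \<Rightarrow> ('i \<Rightarrow> nat \<Rightarrow> nat \<Rightarrow> complex) \<Rightarrow> ('g \<Rightarrow> complex) \<Rightarrow> 'i set \<Rightarrow> 'g \<Rightarrow> complex" where
  "SF \<mu> d \<rho> Rh g F x = (\<Sum>i\<in>F. of_nat (d i) *
                 mat_trace (d i) (mat_prod (d i) (mat_prod (d i) (Rh i) (fourier_coeff \<mu> g (\<rho> i))) (\<rho> i x)))"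

definition CF :: "('i \<Rightarrow> nat) \<Rightarrow> ('i \<Rightarrow> nat \<Rightarrow> nat \<Rightarrow> complex) \<Rightarrow> 'i set \<Rightarrow> real" where
  "CF d Rh F = (\<Sum>i\<in>F. real (d i) * mat_HS_norm_sq (d i) (Rh i))"

definition Jset :: "('i \<Rightarrow> nat) \<Rightarrow> 'i set \<Rightarrow> ('i \<times> nat \<times> nat) set" where
  "Jset d F = Sigma F (\<lambda>i. {..<d i} \<times> {..<d i})"

definition phi :: "('i \<Rightarrow> 'g \<Rightarrow> nat \<Rightarrow> nat \<Rightarrow> complex) \<Rightarrow> 'i \<times> nat \<times> nat \<Rightarrow> 'g \<Rightarrow> complex" where
  "phi \<rho> m = (\<lambda>y. \<rho> (fst m) y (fst (snd m)) (snd (snd m)))"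

definition Wm :: "('i \<Rightarrow> nat) \<Rightarrow> ('i \<Rightarrow> 'g \<Rightarrow> nat \<Rightarrow> nat \<Rightarrow> complex) \<Rightarrow> ('i \<Rightarrow> nat \<Rightarrow> nat \<Rightarrow> complex)
    \<Rightarrow> 'g \<Rightarrow> 'i \<times> nat \<times> nat \<Rightarrow> complex" where
  "Wm d \<rho> Rh x m = mat_prod (d (fst m)) (\<rho> (fst m) x) (Rh (fst m)) (fst (snd m)) (snd (snd m))"

definition Kf :: "('i \<Rightarrow> nat) \<Rightarrow> ('i \<Rightarrow> 'g \<Rightarrow> nat \<Rightarrow> nat \<Rightarrow> complex) \<Rightarrow> ('i \<Rightarrow> nat \<Rightarrow> nat \<Rightarrow> complex)
    \<Rightarrow> 'i set \<Rightarrow> 'g \<Rightarrow> 'g \<Rightarrow> complex" where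
  "Kf d \<rho> Rh F x = (\<lambda>y. \<Sum>m\<in>Jset d F. (of_nat (d (fst m)) * cnj (Wm d \<rho> Rh x m)) * phi \<rho> m y)"

lemma finite_Jset: "finite F \<Longrightarrow> finite (Jset d F)"
  unfolding Jset_def by auto

lemma sum_Jset:
  assumes "finite F"
  shows "(\<Sum>m\<in>Jset d F. G m) = (\<Sum>i\<in>F. \<Sum>c<d i. \<Sum>b<d i. G (i, c, b))"
proof -
  have "(\<Sum>m\<in>Jset d F. G m) = (\<Sum>i\<in>F. \<Sum>p\<in>{..<d i} \<times> {..<d i}. G (i, p))"
    unfolding Jset_def using sum.Sigma[of F "\<lambda>i. {..<d i} \<times> {..<d i}" "\<lambda>i p. G (i, p)"] assms by simp
  also have "\<dots> = (\<Sum>i\<in>F. \<Sum>c<d i. \<Sum>b<d i. G (i, c, b))"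
    by (intro sum.cong refl) (simp add: sum.cartesian_product)
  finally show ?thesis .
qed

locale rep_ctx = haar_ctx \<mu> for \<mu> :: "'g::{group_add,t2_space} measure" +
  fixes I :: "'i set" and d :: "'i \<Rightarrow> nat" and \<rho> :: "'i \<Rightarrow> 'g \<Rightarrow> nat \<Rightarrow> nat \<Rightarrow> complex"
  assumes dr: "dual_reps TYPE('g) I d \<rho>"
begin

lemma irr: "i \<in> I \<Longrightarrow> irreducible_rep (d i) (\<rho> i)"
  using dr unfolding dual_reps_def by blast

lemma urI: "i \<in> I \<Longrightarrow> unitary_rep (d i) (\<rho> i)"
  using irr unfolding irreducible_rep_def by blast

lemma dpos: "i \<in> I \<Longrightarrow> d i > 0"
  using irr unfolding irreducible_rep_def by blast

lemma rho_cont: "i \<in> I \<Longrightarrow> a < d i \<Longrightarrow> b < d i \<Longrightarrow> continuous_on UNIV (\<lambda>x. \<rho> i x a b)"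
  using ur_cont[OF urI] by blast

lemma phi_L2: "F \<subseteq> I \<Longrightarrow> m \<in> Jset d F \<Longrightarrow> phi \<rho> m \<in> L2 \<mu>"
  unfolding Jset_def phi_def by (intro L2_cont) (auto intro!: rho_cont)

lemma phi_orth:
  assumes "F \<subseteq> I" "m \<in> Jset d F" "m' \<in> Jset d F"
  shows "L2_inner \<mu> (phi \<rho> m) (phi \<rho> m') = (if m' = m then 1 / of_nat (d (fst m)) else 0)"
proof -
  obtain i c b where m: "m = (i, c, b)" by (cases m) auto
  obtain j c' b' where m': "m' = (j, c', b')" by (cases m') auto
  have "i \<in> I" "j \<in> I" "c < d i" "b < d i" "c' < d j" "b' < d j"
    using assms m m' unfolding Jset_def by auto
  from schur_orth[OF dr this] show ?thesis
    unfolding L2_inner_def phi_def m m' by auto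
qed

lemma hs_unitary:
  assumes "i \<in> I"
  shows "(\<Sum>p<d i. \<Sum>q<d i. (cmod (mat_prod (d i) (\<rho> i x) A p q))\<^sup>2) = mat_HS_norm_sq (d i) A"
proof -
  have "complex_of_real (\<Sum>p<d i. \<Sum>q<d i. (cmod (mat_prod (d i) (\<rho> i x) A p q))\<^sup>2)
      = (\<Sum>q<d i. \<Sum>p<d i. (\<Sum>a<d i. \<rho> i x p a * A a q) * cnj (\<Sum>a<d i. \<rho> i x p a * A a q))"
    unfolding of_real_sum complex_norm_square mat_prod_def by (rule sum.swap)
  also have "\<dots> = (\<Sum>q<d i. \<Sum>a<d i. A a q * cnj (A a q))"
    by (intro sum.cong refl norm_pres) (use ur_cols[OF urI[OF assms]] in auto)
  also have "\<dots> = complex_of_real (mat_HS_norm_sq (d i) A)"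
    unfolding mat_HS_norm_sq_def of_real_sum complex_norm_square by (rule sum.swap)
  finally show ?thesis by (simp only: of_real_eq_iff)
qed

lemma K_L2: "finite F \<Longrightarrow> F \<subseteq> I \<Longrightarrow> Kf d \<rho> Rh F x \<in> L2 \<mu>"
  unfolding Kf_def by (intro L2_sum finite_Jset phi_L2)

lemma SF_inner:
  assumes F: "finite F" "F \<subseteq> I" and g: "g \<in> L2 \<mu>"
  shows "SF \<mu> d \<rho> Rh g F x = L2_inner \<mu> g (Kf d \<rho> Rh F x)"
proof -
  have "L2_inner \<mu> g (Kf d \<rho> Rh F x)
      = (\<Sum>m\<in>Jset d F. cnj (of_nat (d (fst m)) * cnj (Wm d \<rho> Rh x m)) * L2_inner \<mu> g (phi \<rho> m))"
    unfolding Kf_def by (rule inner_sum_right) (use finite_Jset[OF F(1)] phi_L2[OF F(2)] g in auto)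
  also have "\<dots> = (\<Sum>i\<in>F. \<Sum>c<d i. \<Sum>b<d i. of_nat (d i) * (mat_prod (d i) (\<rho> i x) (Rh i) c b
                   * fourier_coeff \<mu> g (\<rho> i) b c))"
    unfolding sum_Jset[OF F(1)] Wm_def phi_def L2_inner_def fourier_coeff_def by (simp add: mult_ac)
  also have "\<dots> = SF \<mu> d \<rho> Rh g F x"
    unfolding SF_def trace_formula by (simp add: mat_prod_def sum_distrib_left mult_ac)
  finally show ?thesis by simp
qed

lemma K_norm:
  assumes F: "finite F" "F \<subseteq> I"
  shows "L2_inner \<mu> (Kf d \<rho> Rh F x) (Kf d \<rho> Rh F x) = of_real (CF d Rh F)"
proof -
  define \<kappa> where "\<kappa> m = of_nat (d (fst m)) * cnj (Wm d \<rho> Rh x m)" for m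
  have KK: "Kf d \<rho> Rh F x = (\<lambda>y. \<Sum>m\<in>Jset d F. \<kappa> m * phi \<rho> m y)" unfolding Kf_def \<kappa>_def ..
  have fin: "finite (Jset d F)" by (rule finite_Jset[OF F(1)])
  have L: "\<And>m. m \<in> Jset d F \<Longrightarrow> phi \<rho> m \<in> L2 \<mu>" using phi_L2[OF F(2)] by blast
  have "L2_inner \<mu> (Kf d \<rho> Rh F x) (Kf d \<rho> Rh F x) = (\<Sum>m\<in>Jset d F. \<kappa> m * L2_inner \<mu> (phi \<rho> m) (Kf d \<rho> Rh F x))"
    unfolding KK by (rule inner_sum_left[OF fin L]) (use L2_sum[OF fin L] in auto)
  also have "\<dots> = (\<Sum>m\<in>Jset d F. \<kappa> m * (\<Sum>m'\<in>Jset d F. cnj (\<kappa> m') * L2_inner \<mu> (phi \<rho> m) (phi \<rho> m')))"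
    unfolding KK by (intro sum.cong refl arg_cong2[where f="(*)"] inner_sum_right[OF fin L]) (use L in auto)
  also have "\<dots> = (\<Sum>m\<in>Jset d F. \<kappa> m * (\<Sum>m'\<in>Jset d F. if m' = m then cnj (\<kappa> m') / of_nat (d (fst m)) else 0))"
    by (intro sum.cong refl arg_cong2[where f="(*)"]) (auto simp: phi_orth[OF F(2)])
  also have "\<dots> = (\<Sum>m\<in>Jset d F. \<kappa> m * cnj (\<kappa> m) / of_nat (d (fst m)))"
    using fin by (simp add: sum.delta)
  also have "\<dots> = (\<Sum>m\<in>Jset d F. of_real (real (d (fst m)) * (cmod (Wm d \<rho> Rh x m))\<^sup>2))"
  proof (intro sum.cong refl)
    fix m assume "m \<in> Jset d F"
    then have "d (fst m) > 0" using F(2) dpos unfolding Jset_def by auto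
    then show "\<kappa> m * cnj (\<kappa> m) / of_nat (d (fst m)) = of_real (real (d (fst m)) * (cmod (Wm d \<rho> Rh x m))\<^sup>2)"
      unfolding \<kappa>_def of_real_mult complex_norm_square by (simp add: field_simps)
  qed
  also have "\<dots> = of_real (\<Sum>i\<in>F. real (d i) * (\<Sum>c<d i. \<Sum>b<d i. (cmod (mat_prod (d i) (\<rho> i x) (Rh i) c b))\<^sup>2))"
    unfolding of_real_sum[symmetric] sum_Jset[OF F(1)] Wm_def by (simp add: sum_distrib_left)
  also have "\<dots> = of_real (CF d Rh F)"
    unfolding CF_def using hs_unitary F(2) by (intro arg_cong[where f=of_real] sum.cong refl) auto
  finally show ?thesis .
qed

lemma bessel_pt:
  assumes E: "finite E" "orthonormal_L2 \<mu> E" and F: "finite F" "F \<subseteq> I"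
  shows "(\<Sum>e\<in>E. (cmod (SF \<mu> d \<rho> Rh e F x))\<^sup>2) \<le> CF d Rh F"
proof -
  have EL: "\<And>e. e \<in> E \<Longrightarrow> e \<in> L2 \<mu>" using E(2) unfolding orthonormal_L2_def by blast
  have "(\<Sum>e\<in>E. (cmod (SF \<mu> d \<rho> Rh e F x))\<^sup>2) = (\<Sum>e\<in>E. (cmod (L2_inner \<mu> e (Kf d \<rho> Rh F x)))\<^sup>2)"
    using SF_inner[OF F EL] by simp
  also have "\<dots> \<le> Re (L2_inner \<mu> (Kf d \<rho> Rh F x) (Kf d \<rho> Rh F x))"
    by (rule bessel[OF E K_L2[OF F]])
  also have "\<dots> = CF d Rh F" using K_norm[OF F] by simp
  finally show ?thesis .
qed

end



lemma double_delta:
  fixes X :: "nat \<Rightarrow> nat \<Rightarrow> complex"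
  assumes "p < n" "q < n"
  shows "(\<Sum>c<n. \<Sum>b<n. X c b * (if c = p \<and> b = q then \<kappa> else 0)) = X p q * \<kappa>"
proof -
  have "(\<Sum>b<n. X c b * (if c = p \<and> b = q then \<kappa> else 0)) = (if c = p then X c q * \<kappa> else 0)" for c
  proof -
    have "(\<Sum>b<n. X c b * (if c = p \<and> b = q then \<kappa> else 0)) = (\<Sum>b<n. if b = q then (if c = p then X c q * \<kappa> else 0) else 0)"
      by (rule sum.cong) auto
    also have "\<dots> = (if c = p then X c q * \<kappa> else 0)" using assms by (simp add: sum.delta)
    finally show ?thesis .
  qed
  then have "(\<Sum>c<n. \<Sum>b<n. X c b * (if c = p \<and> b = q then \<kappa> else 0)) = (\<Sum>c<n. if c = p then X c q * \<kappa> else 0)"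
    by simp
  also have "\<dots> = X p q * \<kappa>" using assms by (simp add: sum.delta)
  finally show ?thesis .
qed

lemma young_ineq:
  fixes u v :: complex and t :: real
  assumes t: "t > 0"
  shows "(cmod (u + v))\<^sup>2 \<le> (1 + t) * (cmod u)\<^sup>2 + (1 + 1 / t) * (cmod v)\<^sup>2"
proof -
  define a where "a = cmod u"
  define b where "b = cmod v"
  have ab: "0 \<le> a" "0 \<le> b" unfolding a_def b_def by auto
  have "cmod (u + v) \<le> a + b" unfolding a_def b_def by (rule norm_triangle_ineq)
  then have 1: "(cmod (u + v))\<^sup>2 \<le> (a + b)\<^sup>2" by (simp add: power_mono)
  have "0 \<le> (t * a - b)\<^sup>2 / t" using t by simp
  also have "(t * a - b)\<^sup>2 / t = t * a\<^sup>2 - 2 * a * b + b\<^sup>2 / t"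
    using t by (simp add: power2_diff field_simps power2_eq_square)
  finally have 2: "2 * a * b \<le> t * a\<^sup>2 + b\<^sup>2 / t" by simp
  have "(a + b)\<^sup>2 = a\<^sup>2 + 2 * a * b + b\<^sup>2" by (simp add: power2_sum)
  also have "\<dots> \<le> (1 + t) * a\<^sup>2 + (1 + 1 / t) * b\<^sup>2" using 2 by (simp add: field_simps)
  finally show ?thesis using 1 unfolding a_def b_def by linarith
qed

locale main_ctx = rep_ctx \<mu> I d \<rho>
  for \<mu> :: "'g::{group_add,t2_space} measure" and I :: "'i set" and d \<rho> +
  fixes f :: "'g \<Rightarrow> complex" and R :: "('g \<Rightarrow> complex) \<Rightarrow> ('g \<Rightarrow> complex)"
    and Rh :: "'i \<Rightarrow> nat \<Rightarrow> nat \<Rightarrow> complex" and B :: real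
  assumes f_meas: "f \<in> borel_measurable \<mu>" and fB: "\<And>x. cmod (f x) \<le> B"
    and R_L2: "\<And>g. g \<in> L2 \<mu> \<Longrightarrow> R g \<in> L2 \<mu>"
    and approx: "\<And>g \<epsilon>. g \<in> L2 \<mu> \<Longrightarrow> \<epsilon> > 0 \<Longrightarrow> \<exists>F0. finite F0 \<and> F0 \<subseteq> I \<and>
           (\<forall>F. finite F \<and> F0 \<subseteq> F \<and> F \<subseteq> I \<longrightarrow> L2_norm_sq \<mu> (\<lambda>x. R g x - SF \<mu> d \<rho> Rh g F x) < ennreal \<epsilon>)"
begin

lemma B_nonneg: "0 \<le> B" using fB[of undefined] norm_ge_zero[of "f undefined"] by linarith

lemma SF_cont: "finite F \<Longrightarrow> F \<subseteq> I \<Longrightarrow> continuous_on UNIV (\<lambda>x. SF \<mu> d \<rho> Rh g F x)"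
  unfolding SF_def mat_trace_def mat_prod_def
  by (intro continuous_intros) (auto intro!: rho_cont)

lemma SF_meas: "finite F \<Longrightarrow> F \<subseteq> I \<Longrightarrow> (\<lambda>x. SF \<mu> d \<rho> Rh g F x) \<in> borel_measurable \<mu>"
  by (rule cont_meas[OF SF_cont])

lemma R_meas: "g \<in> L2 \<mu> \<Longrightarrow> R g \<in> borel_measurable \<mu>"
  using R_L2 L2D(1) by blast

lemma CF_pt:
  assumes F: "finite F" "F \<subseteq> I"
  shows "(\<Sum>m\<in>Jset d F. real (d (fst m)) * (cmod (Wm d \<rho> Rh x m))\<^sup>2) = CF d Rh F"
  unfolding sum_Jset[OF F(1)] Wm_def CF_def
proof (intro sum.cong refl)
  fix i assume "i \<in> F"
  then have iI: "i \<in> I" using F(2) by auto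
  have "(\<Sum>c<d i. \<Sum>b<d i. real (d (fst (i, c, b))) * (cmod (mat_prod (d (fst (i, c, b))) (\<rho> (fst (i, c, b)) x)
          (Rh (fst (i, c, b))) (fst (snd (i, c, b))) (snd (snd (i, c, b)))))\<^sup>2)
      = real (d i) * (\<Sum>c<d i. \<Sum>b<d i. (cmod (mat_prod (d i) (\<rho> i x) (Rh i) c b))\<^sup>2)"
    by (simp add: sum_distrib_left)
  also have "\<dots> = real (d i) * mat_HS_norm_sq (d i) (Rh i)" using hs_unitary[OF iI] by simp
  finally show "(\<Sum>c<d i. \<Sum>b<d i. real (d (fst (i, c, b))) * (cmod (mat_prod (d (fst (i, c, b))) (\<rho> (fst (i, c, b)) x)
          (Rh (fst (i, c, b))) (fst (snd (i, c, b))) (snd (snd (i, c, b)))))\<^sup>2)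
      = real (d i) * mat_HS_norm_sq (d i) (Rh i)" .
qed

lemma CF_nonneg: "0 \<le> CF d Rh F"
  unfolding CF_def mat_HS_norm_sq_def by (intro sum_nonneg mult_nonneg_nonneg) auto

lemma ae_eq_of_small:
  assumes g: "g \<in> L2 \<mu>" and T: "T \<in> borel_measurable \<mu>"
    and small: "\<And>\<epsilon>. \<epsilon> > 0 \<Longrightarrow> L2_norm_sq \<mu> (\<lambda>x. R g x - T x) < ennreal \<epsilon>"
  shows "AE x in \<mu>. R g x = T x"
proof -
  have "L2_norm_sq \<mu> (\<lambda>x. R g x - T x) \<le> 0"
  proof (rule ennreal_le_epsilon)
    fix e :: real assume "0 < e"
    then show "L2_norm_sq \<mu> (\<lambda>x. R g x - T x) \<le> 0 + ennreal e" using small[of e] by simp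
  qed
  then have "(\<integral>\<^sup>+ x. ennreal ((cmod (R g x - T x))\<^sup>2) \<partial>\<mu>) = 0" unfolding L2_norm_sq_def by simp
  moreover have "(\<lambda>x. ennreal ((cmod (R g x - T x))\<^sup>2)) \<in> borel_measurable \<mu>"
    using R_meas[OF g] T by measurable
  ultimately have "AE x in \<mu>. ennreal ((cmod (R g x - T x))\<^sup>2) = 0"
    using nn_integral_0_iff_AE by blast
  then show ?thesis by eventually_elim simp
qed

lemma f_L2: "f \<in> L2 \<mu>"
proof (rule L2I[OF f_meas])
  interpret prob_space \<mu> by (rule ps)
  show "integrable \<mu> (\<lambda>x. (cmod (f x))\<^sup>2)"
  proof (rule integrable_const_bound[where B="B\<^sup>2"])
    show "AE x in \<mu>. norm ((cmod (f x))\<^sup>2) \<le> B\<^sup>2"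
      using fB by (intro AE_I2) (simp add: power_mono)
    show "(\<lambda>x. (cmod (f x))\<^sup>2) \<in> borel_measurable \<mu>" using f_meas by measurable
  qed
qed

lemma lower:
  assumes F: "finite F" "F \<subseteq> I"
  shows "L2_norm_sq \<mu> f * ennreal (CF d Rh F) \<le> HS_norm_sq \<mu> (\<lambda>g. mult_op f (R g))"
proof -
  define J where "J = Jset d F"
  have finJ: "finite J" unfolding J_def by (rule finite_Jset[OF F(1)])
  define \<psi> where "\<psi> m = (\<lambda>y. complex_of_real (sqrt (real (d (fst m)))) * phi \<rho> m y)" for m
  have JI: "fst m \<in> I" "fst (snd m) < d (fst m)" "snd (snd m) < d (fst m)" if "m \<in> J" for m
    using that F(2) unfolding J_def Jset_def by auto
  have dpos': "d (fst m) > 0" if "m \<in> J" for m using dpos JI(1)[OF that] by blast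
  have psiL2: "\<psi> m \<in> L2 \<mu>" if "m \<in> J" for m
    unfolding \<psi>_def by (rule L2_scale[OF phi_L2[OF F(2)]]) (use that J_def in simp)
  have psi_inner: "L2_inner \<mu> (\<psi> m) (\<psi> m') = (if m' = m then 1 else 0)" if "m \<in> J" "m' \<in> J" for m m'
  proof -
    have "L2_inner \<mu> (\<psi> m) (\<psi> m') = complex_of_real (sqrt (real (d (fst m)))) * complex_of_real (sqrt (real (d (fst m'))))
        * L2_inner \<mu> (phi \<rho> m) (phi \<rho> m')"
    proof -
      have "(\<lambda>x. \<psi> m x * cnj (\<psi> m' x)) = (\<lambda>x. (complex_of_real (sqrt (real (d (fst m)))) * complex_of_real (sqrt (real (d (fst m')))))
          * (phi \<rho> m x * cnj (phi \<rho> m' x)))"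
        unfolding \<psi>_def by (simp add: mult_ac)
      then show ?thesis unfolding L2_inner_def by simp
    qed
    also have "\<dots> = (if m' = m then 1 else 0)"
      using phi_orth[OF F(2), of m m'] that dpos'[OF that(1)] unfolding J_def
      by (auto simp flip: of_real_mult)
    finally show ?thesis .
  qed
  have inj: "inj_on \<psi> J"
  proof (rule inj_onI)
    fix m m' assume mm: "m \<in> J" "m' \<in> J" "\<psi> m = \<psi> m'"
    show "m = m'"
    proof (rule ccontr)
      assume "m \<noteq> m'"
      then have "L2_inner \<mu> (\<psi> m) (\<psi> m') = 0" using psi_inner[OF mm(1,2)] by auto
      moreover have "L2_inner \<mu> (\<psi> m) (\<psi> m) = 1" using psi_inner[OF mm(1,1)] by auto
      ultimately show False using mm(3) by simp
    qed
  qed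
  define E where "E = \<psi> ` J"
  have finE: "finite E" unfolding E_def using finJ by simp
  have onE: "orthonormal_L2 \<mu> E"
    unfolding orthonormal_L2_def E_def
  proof (intro conjI ballI)
    show "\<psi> ` J \<subseteq> L2 \<mu>" using psiL2 by auto
    fix e e' assume "e \<in> \<psi> ` J" "e' \<in> \<psi> ` J"
    then obtain m m' where mm: "m \<in> J" "m' \<in> J" "e = \<psi> m" "e' = \<psi> m'" by auto
    have "(e = e') = (m' = m)" using inj mm unfolding inj_on_def by auto
    then show "L2_inner \<mu> e e' = (if e = e' then 1 else 0)" using psi_inner[OF mm(1,2)] mm by simp
  qed
  define Tm where "Tm m x = complex_of_real (sqrt (real (d (fst m)))) * Wm d \<rho> Rh x m" for m x
  have R_psi: "AE x in \<mu>. R (\<psi> m) x = Tm m x" if mJ: "m \<in> J" for m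
  proof -
    obtain i p q where m: "m = (i, p, q)" by (cases m) auto
    have iI: "i \<in> I" and pq: "p < d i" "q < d i" using JI[OF mJ] m by auto
    define s where "s = complex_of_real (sqrt (real (d i)))"
    have fc: "fourier_coeff \<mu> (\<psi> m) (\<rho> j) b c = s * (if j = i \<and> c = p \<and> b = q then 1 / of_nat (d i) else 0)"
      if "j \<in> I" "b < d j" "c < d j" for j b c
    proof -
      have "fourier_coeff \<mu> (\<psi> m) (\<rho> j) b c = s * (\<integral>y. \<rho> i y p q * cnj (\<rho> j y c b) \<partial>\<mu>)"
        unfolding fourier_coeff_def \<psi>_def phi_def m s_def by (simp add: mult.assoc)
      also have "\<dots> = s * (if i = j \<and> p = c \<and> q = b then 1 / of_nat (d i) else 0)"
        using schur_orth[OF dr iI that(1) pq that(3) that(2)] by simp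
      finally show ?thesis by auto
    qed
    have SFeq: "SF \<mu> d \<rho> Rh (\<psi> m) F' x = Tm m x" if F': "finite F'" "F' \<subseteq> I" "i \<in> F'" for F' x
    proof -
      have "SF \<mu> d \<rho> Rh (\<psi> m) F' x = (\<Sum>j\<in>F'. if j = i then of_nat (d i) * (mat_prod (d i) (\<rho> i x) (Rh i) p q * (s / of_nat (d i))) else 0)"
        unfolding SF_def trace_formula
      proof (intro sum.cong refl)
        fix j assume jF: "j \<in> F'"
        then have jI: "j \<in> I" using F' by auto
        have "(\<Sum>c<d j. \<Sum>b<d j. (\<Sum>a<d j. \<rho> j x c a * Rh j a b) * fourier_coeff \<mu> (\<psi> m) (\<rho> j) b c)
            = (\<Sum>c<d j. \<Sum>b<d j. (\<Sum>a<d j. \<rho> j x c a * Rh j a b) * (if c = p \<and> b = q then (if j = i then s / of_nat (d i) else 0) else 0))"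
          using fc[OF jI] by (intro sum.cong refl) auto
        also have "\<dots> = (if j = i then mat_prod (d i) (\<rho> i x) (Rh i) p q * (s / of_nat (d i)) else 0)"
        proof (cases "j = i")
          case True
          then show ?thesis using double_delta[OF pq] by (simp add: mat_prod_def)
        next
          case False
          then show ?thesis by simp
        qed
        finally show "of_nat (d j) * (\<Sum>c<d j. \<Sum>b<d j. (\<Sum>a<d j. \<rho> j x c a * Rh j a b) * fourier_coeff \<mu> (\<psi> m) (\<rho> j) b c)
            = (if j = i then of_nat (d i) * (mat_prod (d i) (\<rho> i x) (Rh i) p q * (s / of_nat (d i))) else 0)"
          by auto
      qed
      also have "\<dots> = of_nat (d i) * (mat_prod (d i) (\<rho> i x) (Rh i) p q * (s / of_nat (d i)))"
        using F'(1,3) by (simp add: sum.delta')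
      also have "\<dots> = Tm m x"
        unfolding Tm_def Wm_def m s_def using dpos[OF iI] by (simp add: field_simps)
      finally show ?thesis .
    qed
    show ?thesis
    proof (rule ae_eq_of_small)
      show "\<psi> m \<in> L2 \<mu>" by (rule psiL2[OF mJ])
      show "Tm m \<in> borel_measurable \<mu>"
        unfolding Tm_def Wm_def m mat_prod_def
        by (intro cont_meas continuous_intros) (auto intro!: rho_cont iI pq)
      fix \<epsilon> :: real assume "\<epsilon> > 0"
      obtain F0 where F0: "finite F0 \<and> F0 \<subseteq> I \<and>
        (\<forall>F. finite F \<and> F0 \<subseteq> F \<and> F \<subseteq> I \<longrightarrow> L2_norm_sq \<mu> (\<lambda>x. R (\<psi> m) x - SF \<mu> d \<rho> Rh (\<psi> m) F x) < ennreal \<epsilon>)"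
        using approx[OF psiL2[OF mJ] \<open>\<epsilon> > 0\<close>] by (rule exE)
      have F0a: "finite F0" "F0 \<subseteq> I" using F0 by simp_all
      have "finite (insert i F0) \<and> F0 \<subseteq> insert i F0 \<and> insert i F0 \<subseteq> I" using F0a iI by auto
      then have "L2_norm_sq \<mu> (\<lambda>x. R (\<psi> m) x - SF \<mu> d \<rho> Rh (\<psi> m) (insert i F0) x) < ennreal \<epsilon>"
        by (rule F0[THEN conjunct2, THEN conjunct2, THEN spec, THEN mp])
      moreover have "(\<lambda>x. SF \<mu> d \<rho> Rh (\<psi> m) (insert i F0) x) = Tm m"
      proof (rule ext)
        fix x show "SF \<mu> d \<rho> Rh (\<psi> m) (insert i F0) x = Tm m x"
          using SFeq[of "insert i F0" x] F0a iI by simp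
      qed
      ultimately show "L2_norm_sq \<mu> (\<lambda>x. R (\<psi> m) x - Tm m x) < ennreal \<epsilon>" by simp
    qed
  qed
  have Tm_meas: "(\<lambda>x. ennreal ((cmod (f x))\<^sup>2 * (real (d (fst m)) * (cmod (Wm d \<rho> Rh x m))\<^sup>2))) \<in> borel_measurable \<mu>"
    if "m \<in> J" for m
  proof -
    have "(\<lambda>x. Wm d \<rho> Rh x m) \<in> borel_measurable \<mu>"
      unfolding Wm_def mat_prod_def using JI[OF that]
      by (intro cont_meas continuous_intros) (auto intro!: rho_cont)
    then show ?thesis using f_meas by measurable
  qed
  have each: "L2_norm_sq \<mu> (mult_op f (R (\<psi> m)))
      = (\<integral>\<^sup>+ x. ennreal ((cmod (f x))\<^sup>2 * (real (d (fst m)) * (cmod (Wm d \<rho> Rh x m))\<^sup>2)) \<partial>\<mu>)"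
    if "m \<in> J" for m
    unfolding L2_norm_sq_def mult_op_def
  proof (rule nn_integral_cong_AE)
    show "AE x in \<mu>. ennreal ((cmod (f x * R (\<psi> m) x))\<^sup>2) = ennreal ((cmod (f x))\<^sup>2 * (real (d (fst m)) * (cmod (Wm d \<rho> Rh x m))\<^sup>2))"
      using R_psi[OF that]
    proof eventually_elim
      case (elim x)
      then show ?case unfolding Tm_def by (simp add: norm_mult power_mult_distrib)
    qed
  qed
  have a1: "(\<Sum>e\<in>E. L2_norm_sq \<mu> (mult_op f (R e))) \<le> HS_norm_sq \<mu> (\<lambda>g. mult_op f (R g))"
    unfolding HS_norm_sq_def using finE onE by (intro SUP_upper) auto
  have a2: "(\<Sum>e\<in>E. L2_norm_sq \<mu> (mult_op f (R e))) = (\<Sum>m\<in>J. L2_norm_sq \<mu> (mult_op f (R (\<psi> m))))"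
    unfolding E_def using inj by (simp add: sum.reindex)
  have a3: "(\<Sum>m\<in>J. L2_norm_sq \<mu> (mult_op f (R (\<psi> m))))
      = (\<integral>\<^sup>+ x. (\<Sum>m\<in>J. ennreal ((cmod (f x))\<^sup>2 * (real (d (fst m)) * (cmod (Wm d \<rho> Rh x m))\<^sup>2))) \<partial>\<mu>)"
  proof -
    have "(\<Sum>m\<in>J. L2_norm_sq \<mu> (mult_op f (R (\<psi> m))))
      = (\<Sum>m\<in>J. (\<integral>\<^sup>+ x. ennreal ((cmod (f x))\<^sup>2 * (real (d (fst m)) * (cmod (Wm d \<rho> Rh x m))\<^sup>2)) \<partial>\<mu>))"
      by (rule sum.cong[OF refl]) (rule each)
    also have "\<dots> = (\<integral>\<^sup>+ x. (\<Sum>m\<in>J. ennreal ((cmod (f x))\<^sup>2 * (real (d (fst m)) * (cmod (Wm d \<rho> Rh x m))\<^sup>2))) \<partial>\<mu>)"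
      by (rule nn_integral_sum[symmetric]) (rule Tm_meas)
    finally show ?thesis .
  qed
  have a4: "(\<integral>\<^sup>+ x. (\<Sum>m\<in>J. ennreal ((cmod (f x))\<^sup>2 * (real (d (fst m)) * (cmod (Wm d \<rho> Rh x m))\<^sup>2))) \<partial>\<mu>)
     = (\<integral>\<^sup>+ x. ennreal ((cmod (f x))\<^sup>2) * ennreal (CF d Rh F) \<partial>\<mu>)"
  proof (intro nn_integral_cong)
    fix x
    have "(\<Sum>m\<in>J. ennreal ((cmod (f x))\<^sup>2 * (real (d (fst m)) * (cmod (Wm d \<rho> Rh x m))\<^sup>2)))
        = ennreal (\<Sum>m\<in>J. (cmod (f x))\<^sup>2 * (real (d (fst m)) * (cmod (Wm d \<rho> Rh x m))\<^sup>2))"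
      by (intro sum_ennreal) auto
    also have "\<dots> = ennreal ((cmod (f x))\<^sup>2 * CF d Rh F)"
      unfolding sum_distrib_left[symmetric] J_def CF_pt[OF F] ..
    also have "\<dots> = ennreal ((cmod (f x))\<^sup>2) * ennreal (CF d Rh F)"
      by (rule ennreal_mult) (auto simp: CF_nonneg)
    finally show "(\<Sum>m\<in>J. ennreal ((cmod (f x))\<^sup>2 * (real (d (fst m)) * (cmod (Wm d \<rho> Rh x m))\<^sup>2)))
        = ennreal ((cmod (f x))\<^sup>2) * ennreal (CF d Rh F)" .
  qed
  have a5: "(\<integral>\<^sup>+ x. ennreal ((cmod (f x))\<^sup>2) * ennreal (CF d Rh F) \<partial>\<mu>) = L2_norm_sq \<mu> f * ennreal (CF d Rh F)"
    unfolding L2_norm_sq_def using f_meas by (intro nn_integral_multc) measurable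
  have "L2_norm_sq \<mu> f * ennreal (CF d Rh F) = (\<Sum>e\<in>E. L2_norm_sq \<mu> (mult_op f (R e)))"
    unfolding a2 a3 a4 a5 ..
  also note a1
  finally show ?thesis .
qed


lemma upper_eps:
  assumes E: "finite E" "orthonormal_L2 \<mu> E" and t: "t > 0" and \<epsilon>: "\<epsilon> > 0"
  shows "\<exists>F. finite F \<and> F \<subseteq> I \<and> (\<Sum>e\<in>E. L2_norm_sq \<mu> (mult_op f (R e)))
     \<le> ennreal (1 + t) * (L2_norm_sq \<mu> f * ennreal (CF d Rh F)) + ennreal (real (card E) * ((1 + 1 / t) * B\<^sup>2 * \<epsilon>))"
proof -
  have EL: "\<And>e. e \<in> E \<Longrightarrow> e \<in> L2 \<mu>" using E(2) unfolding orthonormal_L2_def by blast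
  have "\<forall>e\<in>E. \<exists>F0. finite F0 \<and> F0 \<subseteq> I \<and>
           (\<forall>F. finite F \<and> F0 \<subseteq> F \<and> F \<subseteq> I \<longrightarrow> L2_norm_sq \<mu> (\<lambda>x. R e x - SF \<mu> d \<rho> Rh e F x) < ennreal \<epsilon>)"
  proof (intro ballI)
    fix e assume "e \<in> E"
    show "\<exists>F0. finite F0 \<and> F0 \<subseteq> I \<and>
           (\<forall>F. finite F \<and> F0 \<subseteq> F \<and> F \<subseteq> I \<longrightarrow> L2_norm_sq \<mu> (\<lambda>x. R e x - SF \<mu> d \<rho> Rh e F x) < ennreal \<epsilon>)"
      by (rule approx[OF EL[OF \<open>e \<in> E\<close>] \<epsilon>])
  qed
  from bchoice[OF this] obtain G where G: "\<forall>e\<in>E. finite (G e) \<and> G e \<subseteq> I \<and>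
           (\<forall>F. finite F \<and> G e \<subseteq> F \<and> F \<subseteq> I \<longrightarrow> L2_norm_sq \<mu> (\<lambda>x. R e x - SF \<mu> d \<rho> Rh e F x) < ennreal \<epsilon>)"
    by (rule exE)
  define F where "F = \<Union>(G ` E)"
  have finF: "finite F" unfolding F_def using E(1) G by auto
  have FI: "F \<subseteq> I" unfolding F_def using G by auto
  have small: "L2_norm_sq \<mu> (\<lambda>x. R e x - SF \<mu> d \<rho> Rh e F x) < ennreal \<epsilon>" if e: "e \<in> E" for e
  proof -
    have Ge: "finite (G e) \<and> G e \<subseteq> I \<and>
           (\<forall>F. finite F \<and> G e \<subseteq> F \<and> F \<subseteq> I \<longrightarrow> L2_norm_sq \<mu> (\<lambda>x. R e x - SF \<mu> d \<rho> Rh e F x) < ennreal \<epsilon>)"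
      by (rule bspec[OF G e])
    have "finite F \<and> G e \<subseteq> F \<and> F \<subseteq> I" using finF FI e unfolding F_def by auto
    then show ?thesis by (rule Ge[THEN conjunct2, THEN conjunct2, THEN spec, THEN mp])
  qed
  define c2 where "c2 = (1 + 1 / t) * B\<^sup>2"
  have c2: "0 \<le> c2" unfolding c2_def using t by simp
  define A where "A e = (\<integral>\<^sup>+ x. ennreal ((cmod (f x))\<^sup>2 * (cmod (SF \<mu> d \<rho> Rh e F x))\<^sup>2) \<partial>\<mu>)" for e
  have each: "L2_norm_sq \<mu> (mult_op f (R e)) \<le> ennreal (1 + t) * A e + ennreal c2 * ennreal \<epsilon>"
    if e: "e \<in> E" for e
  proof -
    have Rm: "R e \<in> borel_measurable \<mu>" by (rule R_meas[OF EL[OF e]])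
    have Sm: "(\<lambda>x. SF \<mu> d \<rho> Rh e F x) \<in> borel_measurable \<mu>" by (rule SF_meas[OF finF FI])
    have pt: "ennreal ((cmod (mult_op f (R e) x))\<^sup>2)
        \<le> ennreal (1 + t) * ennreal ((cmod (f x))\<^sup>2 * (cmod (SF \<mu> d \<rho> Rh e F x))\<^sup>2)
          + ennreal c2 * ennreal ((cmod (R e x - SF \<mu> d \<rho> Rh e F x))\<^sup>2)" for x
    proof -
      define u where "u = f x * SF \<mu> d \<rho> Rh e F x"
      define v where "v = f x * (R e x - SF \<mu> d \<rho> Rh e F x)"
      have uv: "mult_op f (R e) x = u + v" unfolding mult_op_def u_def v_def by (simp add: algebra_simps)
      have fB2: "(cmod (f x))\<^sup>2 \<le> B\<^sup>2" using fB[of x] by (simp add: power_mono)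
      have "(cmod (mult_op f (R e) x))\<^sup>2 \<le> (1 + t) * (cmod u)\<^sup>2 + (1 + 1 / t) * (cmod v)\<^sup>2"
        unfolding uv by (rule young_ineq[OF t])
      also have "(cmod v)\<^sup>2 = (cmod (f x))\<^sup>2 * (cmod (R e x - SF \<mu> d \<rho> Rh e F x))\<^sup>2"
        unfolding v_def by (simp add: norm_mult power_mult_distrib)
      also have "\<dots> \<le> B\<^sup>2 * (cmod (R e x - SF \<mu> d \<rho> Rh e F x))\<^sup>2"
        by (rule mult_right_mono[OF fB2]) simp
      finally have "(cmod (mult_op f (R e) x))\<^sup>2 \<le> (1 + t) * ((cmod (f x))\<^sup>2 * (cmod (SF \<mu> d \<rho> Rh e F x))\<^sup>2)
          + c2 * (cmod (R e x - SF \<mu> d \<rho> Rh e F x))\<^sup>2"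
        unfolding c2_def u_def using t by (simp add: norm_mult power_mult_distrib mult_left_mono mult.assoc)
      then have "ennreal ((cmod (mult_op f (R e) x))\<^sup>2) \<le> ennreal ((1 + t) * ((cmod (f x))\<^sup>2 * (cmod (SF \<mu> d \<rho> Rh e F x))\<^sup>2)
          + c2 * (cmod (R e x - SF \<mu> d \<rho> Rh e F x))\<^sup>2)"
        by (rule ennreal_leI)
      also have "\<dots> = ennreal (1 + t) * ennreal ((cmod (f x))\<^sup>2 * (cmod (SF \<mu> d \<rho> Rh e F x))\<^sup>2)
          + ennreal c2 * ennreal ((cmod (R e x - SF \<mu> d \<rho> Rh e F x))\<^sup>2)"
        using t c2 by (simp add: ennreal_mult ennreal_plus)
      finally show ?thesis .
    qed
    have "L2_norm_sq \<mu> (mult_op f (R e))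
        \<le> (\<integral>\<^sup>+ x. ennreal (1 + t) * ennreal ((cmod (f x))\<^sup>2 * (cmod (SF \<mu> d \<rho> Rh e F x))\<^sup>2)
          + ennreal c2 * ennreal ((cmod (R e x - SF \<mu> d \<rho> Rh e F x))\<^sup>2) \<partial>\<mu>)"
      unfolding L2_norm_sq_def by (rule nn_integral_mono) (rule pt)
    also have "\<dots> = ennreal (1 + t) * A e + ennreal c2 * L2_norm_sq \<mu> (\<lambda>x. R e x - SF \<mu> d \<rho> Rh e F x)"
      unfolding A_def L2_norm_sq_def using Rm Sm f_meas
      by (subst nn_integral_add; (subst nn_integral_cmult)?; measurable?) (simp_all add: nn_integral_cmult)
    also have "\<dots> \<le> ennreal (1 + t) * A e + ennreal c2 * ennreal \<epsilon>"
      using small[OF e] by (intro add_left_mono mult_left_mono) auto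
    finally show ?thesis .
  qed
  have "(\<Sum>e\<in>E. L2_norm_sq \<mu> (mult_op f (R e))) \<le> (\<Sum>e\<in>E. ennreal (1 + t) * A e + ennreal c2 * ennreal \<epsilon>)"
    by (rule sum_mono) (rule each)
  also have "\<dots> = ennreal (1 + t) * (\<Sum>e\<in>E. A e) + of_nat (card E) * (ennreal c2 * ennreal \<epsilon>)"
    by (simp add: sum.distrib sum_distrib_left)
  also have "(\<Sum>e\<in>E. A e) \<le> L2_norm_sq \<mu> f * ennreal (CF d Rh F)"
  proof -
    have "(\<Sum>e\<in>E. A e) = (\<integral>\<^sup>+ x. (\<Sum>e\<in>E. ennreal ((cmod (f x))\<^sup>2 * (cmod (SF \<mu> d \<rho> Rh e F x))\<^sup>2)) \<partial>\<mu>)"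
      unfolding A_def
      by (rule nn_integral_sum[symmetric]) (use f_meas SF_meas[OF finF FI] in measurable)
    also have "\<dots> \<le> (\<integral>\<^sup>+ x. ennreal ((cmod (f x))\<^sup>2) * ennreal (CF d Rh F) \<partial>\<mu>)"
    proof (rule nn_integral_mono)
      fix x
      have "(\<Sum>e\<in>E. ennreal ((cmod (f x))\<^sup>2 * (cmod (SF \<mu> d \<rho> Rh e F x))\<^sup>2))
          = ennreal ((cmod (f x))\<^sup>2 * (\<Sum>e\<in>E. (cmod (SF \<mu> d \<rho> Rh e F x))\<^sup>2))"
        by (subst sum_ennreal) (auto simp: sum_distrib_left)
      also have "\<dots> \<le> ennreal ((cmod (f x))\<^sup>2 * CF d Rh F)"
        by (intro ennreal_leI mult_left_mono bessel_pt[OF E finF FI]) simp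
      also have "\<dots> = ennreal ((cmod (f x))\<^sup>2) * ennreal (CF d Rh F)"
        by (rule ennreal_mult) (auto simp: CF_nonneg)
      finally show "(\<Sum>e\<in>E. ennreal ((cmod (f x))\<^sup>2 * (cmod (SF \<mu> d \<rho> Rh e F x))\<^sup>2))
          \<le> ennreal ((cmod (f x))\<^sup>2) * ennreal (CF d Rh F)" .
    qed
    also have "\<dots> = L2_norm_sq \<mu> f * ennreal (CF d Rh F)"
      unfolding L2_norm_sq_def using f_meas by (intro nn_integral_multc) measurable
    finally show ?thesis .
  qed
  then have "ennreal (1 + t) * (\<Sum>e\<in>E. A e) + of_nat (card E) * (ennreal c2 * ennreal \<epsilon>)
      \<le> ennreal (1 + t) * (L2_norm_sq \<mu> f * ennreal (CF d Rh F)) + of_nat (card E) * (ennreal c2 * ennreal \<epsilon>)"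
    by (intro add_right_mono mult_left_mono) auto
  also have "of_nat (card E) * (ennreal c2 * ennreal \<epsilon>) = ennreal (real (card E) * ((1 + 1 / t) * B\<^sup>2 * \<epsilon>))"
  proof -
    have "ennreal c2 * ennreal \<epsilon> = ennreal (c2 * \<epsilon>)" using c2 \<epsilon> by (simp add: ennreal_mult)
    moreover have "(of_nat (card E) :: ennreal) = ennreal (real (card E))" by (simp add: ennreal_of_nat_eq_real_of_nat)
    ultimately have "of_nat (card E) * (ennreal c2 * ennreal \<epsilon>) = ennreal (real (card E)) * ennreal (c2 * \<epsilon>)" by simp
    also have "\<dots> = ennreal (real (card E) * (c2 * \<epsilon>))" by (rule ennreal_mult[symmetric]) (use c2 \<epsilon> in auto)
    finally show ?thesis unfolding c2_def by (simp add: mult.assoc)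
  qed
  finally show ?thesis using finF FI by blast
qed

lemma upper:
  assumes E: "finite E" "orthonormal_L2 \<mu> E"
    and S: "\<And>F. finite F \<Longrightarrow> F \<subseteq> I \<Longrightarrow> ennreal (CF d Rh F) \<le> S"
  shows "(\<Sum>e\<in>E. L2_norm_sq \<mu> (mult_op f (R e))) \<le> L2_norm_sq \<mu> f * S"
proof (rule ennreal_le_epsilon)
  fix \<delta> :: real assume fin: "L2_norm_sq \<mu> f * S < Orderings.top" and \<delta>: "0 < \<delta>"
  obtain x where x: "L2_norm_sq \<mu> f * S = ennreal x" "0 \<le> x"
    using fin by (cases "L2_norm_sq \<mu> f * S" rule: ennreal_cases) auto
  define t where "t = \<delta> / (2 * (x + 1))"
  have t: "t > 0" unfolding t_def using \<delta> x by simp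
  define K where "K = real (card E) * ((1 + 1 / t) * B\<^sup>2)"
  have K: "0 \<le> K" unfolding K_def using t by simp
  define \<epsilon> where "\<epsilon> = \<delta> / (2 * (K + 1))"
  have \<epsilon>: "\<epsilon> > 0" unfolding \<epsilon>_def using \<delta> K by simp
  obtain F where F: "finite F" "F \<subseteq> I" and le: "(\<Sum>e\<in>E. L2_norm_sq \<mu> (mult_op f (R e)))
     \<le> ennreal (1 + t) * (L2_norm_sq \<mu> f * ennreal (CF d Rh F)) + ennreal (real (card E) * ((1 + 1 / t) * B\<^sup>2 * \<epsilon>))"
    using upper_eps[OF E t \<epsilon>] by blast
  have "K * \<epsilon> \<le> \<delta> / 2"
  proof -
    have "K * \<epsilon> = (\<delta> / 2) * (K / (K + 1))" unfolding \<epsilon>_def using K by (simp add: field_simps)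
    also have "\<dots> \<le> (\<delta> / 2) * 1" using K \<delta> by (intro mult_left_mono) auto
    finally show ?thesis by simp
  qed
  then have e1: "real (card E) * ((1 + 1 / t) * B\<^sup>2 * \<epsilon>) \<le> \<delta> / 2" unfolding K_def by (simp add: mult.assoc)
  have "t * x \<le> \<delta> / 2"
  proof -
    have "t * x = (\<delta> / 2) * (x / (x + 1))" unfolding t_def using x by (simp add: field_simps)
    also have "\<dots> \<le> (\<delta> / 2) * 1" using x \<delta> by (intro mult_left_mono) auto
    finally show ?thesis by simp
  qed
  then have e2: "(1 + t) * x \<le> x + \<delta> / 2" by (simp add: algebra_simps)
  have "ennreal (1 + t) * (L2_norm_sq \<mu> f * ennreal (CF d Rh F)) \<le> ennreal (1 + t) * (L2_norm_sq \<mu> f * S)"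
    using S[OF F] by (intro mult_left_mono) auto
  also have "\<dots> = ennreal ((1 + t) * x)" using x t by (simp add: ennreal_mult)
  finally have "(\<Sum>e\<in>E. L2_norm_sq \<mu> (mult_op f (R e))) \<le> ennreal ((1 + t) * x) + ennreal (real (card E) * ((1 + 1 / t) * B\<^sup>2 * \<epsilon>))"
    using le by (meson add_right_mono order_trans)
  also have "\<dots> \<le> ennreal (x + \<delta> / 2) + ennreal (\<delta> / 2)"
    using e1 e2 by (intro add_mono ennreal_leI) auto
  also have "\<dots> = ennreal x + ennreal \<delta>" using x \<delta> by (simp flip: ennreal_plus)
  finally show "(\<Sum>e\<in>E. L2_norm_sq \<mu> (mult_op f (R e))) \<le> L2_norm_sq \<mu> f * S + ennreal \<delta>" using x by simp
qed

end

theorem mainTheorem7: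
  fixes \<mu> :: "'g::{group_add,t2_space} measure"
    and f :: "'g \<Rightarrow> complex"
    and R :: "('g \<Rightarrow> complex) \<Rightarrow> ('g \<Rightarrow> complex)"
    and I :: "'i set" and d :: "'i \<Rightarrow> nat"
    and \<rho> :: "'i \<Rightarrow> 'g \<Rightarrow> nat \<Rightarrow> nat \<Rightarrow> complex"
    and Rh :: "'i \<Rightarrow> nat \<Rightarrow> nat \<Rightarrow> complex"
  assumes "compact_group TYPE('g)"
    and "haar_prob \<mu>"
    and "f \<in> borel_measurable \<mu>" and "\<exists>B. \<forall>x. cmod (f x) \<le> B"
    and "dual_reps TYPE('g) I d \<rho>"
    and "\<forall>g\<in>L2 \<mu>. R g \<in> L2 \<mu>"
    and "\<forall>g\<in>L2 \<mu>. \<forall>x. AE y in \<mu>. R (left_mult x g) y = left_mult x (R g) y"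
    and "\<forall>g\<in>L2 \<mu>. \<forall>\<epsilon>>0. \<exists>F0. finite F0 \<and> F0 \<subseteq> I \<and>
           (\<forall>F. finite F \<and> F0 \<subseteq> F \<and> F \<subseteq> I \<longrightarrow>
              L2_norm_sq \<mu> (\<lambda>x. R g x - (\<Sum>i\<in>F. of_nat (d i) *
                 mat_trace (d i) (mat_prod (d i) (mat_prod (d i) (Rh i) (fourier_coeff \<mu> g (\<rho> i))) (\<rho> i x))))
              < ennreal \<epsilon>)"
  shows "HS_norm_sq \<mu> (\<lambda>g. mult_op f (R g))
           = L2_norm_sq \<mu> f * (\<Sum>\<^sub>\<infinity>i\<in>I. ennreal (real (d i) * mat_HS_norm_sq (d i) (Rh i)))"
proof -
  obtain B where B: "\<And>x. cmod (f x) \<le> B" using assms(4) by blast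
  have ap: "\<exists>F0. finite F0 \<and> F0 \<subseteq> I \<and>
           (\<forall>F. finite F \<and> F0 \<subseteq> F \<and> F \<subseteq> I \<longrightarrow> L2_norm_sq \<mu> (\<lambda>x. R g x - SF \<mu> d \<rho> Rh g F x) < ennreal \<epsilon>)"
    if "g \<in> L2 \<mu>" "\<epsilon> > 0" for g \<epsilon>
    unfolding SF_def by (rule assms(8)[rule_format, OF that])
  have RL: "R g \<in> L2 \<mu>" if "g \<in> L2 \<mu>" for g using assms(6) that by blast
  interpret main_ctx \<mu> I d \<rho> f R Rh B
    by unfold_locales (fact assms(1) assms(2) assms(5) assms(3) B RL ap)+
  define Fs where "Fs = {F. finite F \<and> F \<subseteq> I}"
  have S: "(\<Sum>\<^sub>\<infinity>i\<in>I. ennreal (real (d i) * mat_HS_norm_sq (d i) (Rh i))) = (SUP F\<in>Fs. ennreal (CF d Rh F))"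
  proof -
    have "(\<Sum>\<^sub>\<infinity>i\<in>I. ennreal (real (d i) * mat_HS_norm_sq (d i) (Rh i)))
        = (SUP F\<in>{F. finite F \<and> F \<subseteq> I}. \<Sum>i\<in>F. ennreal (real (d i) * mat_HS_norm_sq (d i) (Rh i)))"
      by (rule nonneg_infsum_complete) simp
    also have "\<dots> = (SUP F\<in>Fs. ennreal (CF d Rh F))"
      unfolding Fs_def CF_def
      by (intro SUP_cong refl sum_ennreal) (auto simp: mat_HS_norm_sq_def intro!: mult_nonneg_nonneg sum_nonneg)
    finally show ?thesis .
  qed
  show ?thesis unfolding S
  proof (rule antisym)
    show "HS_norm_sq \<mu> (\<lambda>g. mult_op f (R g)) \<le> L2_norm_sq \<mu> f * (SUP F\<in>Fs. ennreal (CF d Rh F))"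
      unfolding HS_norm_sq_def
    proof (rule SUP_least)
      fix E assume "E \<in> {E. finite E \<and> orthonormal_L2 \<mu> E}"
      then have E: "finite E" "orthonormal_L2 \<mu> E" by auto
      show "(\<Sum>e\<in>E. L2_norm_sq \<mu> (mult_op f (R e))) \<le> L2_norm_sq \<mu> f * (SUP F\<in>Fs. ennreal (CF d Rh F))"
        by (rule upper[OF E]) (auto simp: Fs_def intro!: SUP_upper)
    qed
  next
    show "L2_norm_sq \<mu> f * (SUP F\<in>Fs. ennreal (CF d Rh F)) \<le> HS_norm_sq \<mu> (\<lambda>g. mult_op f (R g))"
      unfolding SUP_mult_left_ennreal
    proof (rule SUP_least)
      fix F assume "F \<in> Fs"
      then show "L2_norm_sq \<mu> f * ennreal (CF d Rh F) \<le> HS_norm_sq \<mu> (\<lambda>g. mult_op f (R g))"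
        unfolding Fs_def by (intro lower) auto
    qed
  qed
qed

end
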